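(* Let $\Gamma\subset\mathrm{PGL}(2,\mathbb{C})$ be a torsion-free Kleinian group (of finite covolume). Then the map $H_1(\Gamma;S_1(\mathbb{CP}^1))\to H_1(\Gamma;S_0(\mathbb{CP}^1))$ induced by the boundary map $\partial\colon S_1(\mathbb{CP}^1)\to S_0(\mathbb{CP}^1)$, $\langle z_0,z_1\rangle\mapsto\langle z_1\rangle-\langle z_0\rangle$, is injective.
   Context: $S_n(\mathbb{CP}^1)$ is the free abelian group on ordered $(n+1)$-tuples of distinct points of $\mathbb{CP}^1$ modulo $\langle z_0,\dots,z_n\rangle=\operatorname{sgn}(\tau)\langle z_{\tau(0)},\dots,z_{\tau(n)}\rangle$, a $\mathbb{Z}\Gamma$-module via the action of $\Gamma$ on $\mathbb{CP}^1=\partial\overline{\mathbb{H}}^3$; $H_1(\Gamma;N)$ denotes group homology with coefficients in the $\mathbb{Z}\Gamma$-module $N$. *)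

theory Defs
  imports "HOL-Analysis.Analysis" "HOL-Combinatorics.Permutations"
begin

text \<open>CP^1 = C \<union> {\<infinity>}, modelled as complex option (None = \<infinity>).\<close>
type_synonym pt = "complex option"

definition moeb :: "complex^2^2 \<Rightarrow> pt \<Rightarrow> pt" where
  "moeb A p = (let a = A$1$1; b = A$1$2; c = A$2$1; d = A$2$2 in
     (case p of
        None \<Rightarrow> (if c = 0 then None else Some (a / c))
      | Some z \<Rightarrow> (if c * z + d = 0 then None else Some ((a * z + b) / (c * z + d)))))"

text \<open>PGL(2,C), realised as the group of Moebius transformations of CP^1
  (a Moebius map determines its matrix up to a scalar).\<close>
definition PGL2 :: "(pt \<Rightarrow> pt) set" where
  "PGL2 = {moeb A | A. det A \<noteq> 0}"

definition sl_reps :: "(pt \<Rightarrow> pt) \<Rightarrow> (complex^2^2) set" where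
  "sl_reps g = {A. det A = 1 \<and> moeb A = g}"

definition is_subgroup_PGL2 :: "(pt \<Rightarrow> pt) set \<Rightarrow> bool" where
  "is_subgroup_PGL2 \<Gamma> \<longleftrightarrow> \<Gamma> \<subseteq> PGL2 \<and> id \<in> \<Gamma> \<and>
     (\<forall>g\<in>\<Gamma>. \<forall>h\<in>\<Gamma>. g \<circ> h \<in> \<Gamma>) \<and> (\<forall>g\<in>\<Gamma>. inv g \<in> \<Gamma>)"

text \<open>Discreteness in PGL(2,C): the preimage in SL(2,C) (a double cover)
  is a discrete subset of the matrix space.\<close>
definition discrete_PGL2 :: "(pt \<Rightarrow> pt) set \<Rightarrow> bool" where
  "discrete_PGL2 \<Gamma> \<longleftrightarrow>
     (let P = (\<Union>g\<in>\<Gamma>. sl_reps g) in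
      \<forall>A\<in>P. \<exists>e>0. \<forall>B\<in>P. B \<noteq> A \<longrightarrow> e \<le> dist A B)"

definition kleinian :: "(pt \<Rightarrow> pt) set \<Rightarrow> bool" where
  "kleinian \<Gamma> \<longleftrightarrow> is_subgroup_PGL2 \<Gamma> \<and> discrete_PGL2 \<Gamma>"

definition torsion_free :: "(pt \<Rightarrow> pt) set \<Rightarrow> bool" where
  "torsion_free \<Gamma> \<longleftrightarrow> (\<forall>g\<in>\<Gamma>. \<forall>n::nat. n > 0 \<and> (g ^^ n) = id \<longrightarrow> g = id)"

definition H3 :: "(complex \<times> real) set" where
  "H3 = {p. snd p > 0}"

text \<open>Poincare extension of the Moebius map of an SL(2,C) matrix to H^3.\<close>
definition poincare :: "complex^2^2 \<Rightarrow> complex \<times> real \<Rightarrow> complex \<times> real" where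
  "poincare A p = (let a = A$1$1; b = A$1$2; c = A$2$1; d = A$2$2;
      z = fst p; t = snd p;
      D = (cmod (c * z + d))^2 + (cmod c)^2 * t^2 in
      (((a * z + b) * cnj (c * z + d) + a * cnj c * complex_of_real (t^2)) / complex_of_real D,
       t / D))"

text \<open>Hyperbolic volume dx dy dt / t^3.\<close>
definition hvol :: "(complex \<times> real) set \<Rightarrow> ennreal" where
  "hvol F = (\<integral>\<^sup>+ p. indicator F p * ennreal (1 / (snd p)^3) \<partial>lborel)"

definition finite_covolume :: "(pt \<Rightarrow> pt) set \<Rightarrow> bool" where
  "finite_covolume \<Gamma> \<longleftrightarrow>
     (\<exists>F \<in> sets lborel. F \<subseteq> H3 \<and> hvol F < \<infinity> \<and>
        H3 \<subseteq> (\<Union>g\<in>\<Gamma>. poincare (SOME A. A \<in> sl_reps g) ` F))"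

section \<open>Free abelian groups as finitely supported integer functions\<close>

definition delta :: "'k \<Rightarrow> 'k \<Rightarrow> int" where
  "delta k = (\<lambda>l. if l = k then 1 else 0)"

inductive_set zspan :: "('k \<Rightarrow> int) set \<Rightarrow> ('k \<Rightarrow> int) set" for B where
  zspan_zero: "(\<lambda>_. 0) \<in> zspan B"
| zspan_base: "b \<in> B \<Longrightarrow> b \<in> zspan B"
| zspan_diff: "x \<in> zspan B \<Longrightarrow> y \<in> zspan B \<Longrightarrow> (\<lambda>k. x k - y k) \<in> zspan B"

definition lin :: "('k \<Rightarrow> ('l \<Rightarrow> int)) \<Rightarrow> ('k \<Rightarrow> int) \<Rightarrow> ('l \<Rightarrow> int)" where
  "lin \<phi> c = (\<lambda>l. \<Sum>k\<in>{k. c k \<noteq> 0}. c k * \<phi> k l)"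

text \<open>Generators of S_n: ordered (n+1)-tuples of distinct points.\<close>
definition tuples :: "nat \<Rightarrow> pt list set" where
  "tuples n = {zs. length zs = Suc n \<and> distinct zs}"

definition permute_tuple :: "(nat \<Rightarrow> nat) \<Rightarrow> pt list \<Rightarrow> pt list" where
  "permute_tuple \<tau> zs = map (\<lambda>i. zs ! \<tau> i) [0..<length zs]"

text \<open>Boundary S_n \<rightarrow> S_(n-1): sum of (-1)^i <z_0..(omit z_i)..z_n>.\<close>
definition omit :: "nat \<Rightarrow> 'a list \<Rightarrow> 'a list" where
  "omit i xs = take i xs @ drop (Suc i) xs"

text \<open>A k-chain with coefficients in S_n is represented by an element of
  F_n \<otimes> Z[Gamma^k] = Z[Gamma^k \<times> tuples n], taken modulo R_n \<otimes> Z[Gamma^k],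
  where R_n is the subgroup of sign relations.\<close>

definition chains :: "(pt \<Rightarrow> pt) set \<Rightarrow> nat \<Rightarrow> nat \<Rightarrow> (((pt \<Rightarrow> pt) list \<times> pt list) \<Rightarrow> int) set" where
  "chains \<Gamma> k n = zspan {delta (gs, zs) | gs zs. length gs = k \<and> set gs \<subseteq> \<Gamma> \<and> zs \<in> tuples n}"

definition rel_chains :: "(pt \<Rightarrow> pt) set \<Rightarrow> nat \<Rightarrow> nat \<Rightarrow> (((pt \<Rightarrow> pt) list \<times> pt list) \<Rightarrow> int) set" where
  "rel_chains \<Gamma> k n = zspan {(\<lambda>x. delta (gs, zs) x - sign \<tau> * delta (gs, permute_tuple \<tau> zs) x)
      | gs zs \<tau>. length gs = k \<and> set gs \<subseteq> \<Gamma> \<and> zs \<in> tuples n \<and> \<tau> permutes {..n}}"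

text \<open>Bar differential on generators m[g_1|...|g_k] (left module, g.<z> = <g z>):
  d(m[g_1|..|g_k]) = (g_1^-1 m)[g_2|..|g_k] + sum_{i=1}^{k-1} (-1)^i m[..|g_i g_(i+1)|..]
                     + (-1)^k m[g_1|..|g_(k-1)].\<close>
definition merge_at :: "nat \<Rightarrow> (pt \<Rightarrow> pt) list \<Rightarrow> (pt \<Rightarrow> pt) list" where
  "merge_at i gs = take i gs @ [gs ! i \<circ> gs ! Suc i] @ drop (Suc (Suc i)) gs"

definition bar_d :: "((pt \<Rightarrow> pt) list \<times> pt list) \<Rightarrow> (((pt \<Rightarrow> pt) list \<times> pt list) \<Rightarrow> int)" where
  "bar_d x = (let gs = fst x; zs = snd x; k = length gs in
     (\<lambda>y. delta (tl gs, map (inv (hd gs)) zs) y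
        + (\<Sum>i<k - 1. (-1) ^ Suc i * delta (merge_at i gs, zs) y)
        + (-1) ^ k * delta (butlast gs, zs) y))"

definition coeff_bd :: "((pt \<Rightarrow> pt) list \<times> pt list) \<Rightarrow> (((pt \<Rightarrow> pt) list \<times> pt list) \<Rightarrow> int)" where
  "coeff_bd x = (\<lambda>y. \<Sum>i<length (snd x). (-1) ^ i * delta (fst x, omit i (snd x)) y)"

definition cycles1 :: "(pt \<Rightarrow> pt) set \<Rightarrow> nat \<Rightarrow> (((pt \<Rightarrow> pt) list \<times> pt list) \<Rightarrow> int) set" where
  "cycles1 \<Gamma> n = {c \<in> chains \<Gamma> 1 n. lin bar_d c \<in> rel_chains \<Gamma> 0 n}"

definition boundaries1 :: "(pt \<Rightarrow> pt) set \<Rightarrow> nat \<Rightarrow> (((pt \<Rightarrow> pt) list \<times> pt list) \<Rightarrow> int) set" where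
  "boundaries1 \<Gamma> n = {(\<lambda>y. lin bar_d b y + r y) | b r. b \<in> chains \<Gamma> 2 n \<and> r \<in> rel_chains \<Gamma> 1 n}"

end

theory Submission
  imports Defs
begin

definition mat2 :: "complex \<Rightarrow> complex \<Rightarrow> complex \<Rightarrow> complex \<Rightarrow> complex^2^2" where
  "mat2 a b c d = vector [vector [a, b], vector [c, d]]"

lemma mat2_nth [simp]:
  "mat2 a b c d $ 1 $ 1 = a" "mat2 a b c d $ 1 $ 2 = b"
  "mat2 a b c d $ 2 $ 1 = c" "mat2 a b c d $ 2 $ 2 = d"
  by (simp_all add: mat2_def)

lemma mat2_eta: "A = mat2 (A$1$1) (A$1$2) (A$2$1) (A$2$2)"
  by (simp add: vec_eq_iff forall_2)

lemma mat2_eq_iff: "mat2 a b c d = mat2 a' b' c' d' \<longleftrightarrow> a = a' \<and> b = b' \<and> c = c' \<and> d = d'"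
  by (metis mat2_nth)

lemma mat2_mult: "mat2 a b c d ** mat2 e f g h = mat2 (a*e+b*g) (a*f+b*h) (c*e+d*g) (c*f+d*h)"
  by (simp add: vec_eq_iff forall_2 matrix_matrix_mult_def sum_2)

lemma det_mat2: "det (mat2 a b c d) = a*d - b*c"
  by (simp add: det_2)

lemma mat1_mat2: "(mat 1 :: complex^2^2) = mat2 1 0 0 1"
  by (simp add: vec_eq_iff forall_2 mat_def)

definition mob :: "complex \<Rightarrow> complex \<Rightarrow> complex \<Rightarrow> complex \<Rightarrow> pt \<Rightarrow> pt" where
  "mob a b c d p = (case p of
        None \<Rightarrow> (if c = 0 then None else Some (a / c))
      | Some z \<Rightarrow> (if c * z + d = 0 then None else Some ((a * z + b) / (c * z + d))))"

lemma moeb_mat2: "moeb (mat2 a b c d) = mob a b c d"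
  by (simp add: moeb_def mob_def fun_eq_iff)

lemma mob_None: "mob a b c d None = (if c = 0 then None else Some (a / c))"
  and mob_Some: "mob a b c d (Some z) = (if c * z + d = 0 then None else Some ((a * z + b) / (c * z + d)))"
  by (simp_all add: mob_def)

lemma mob_comp:
  assumes "e*h - f*g \<noteq> 0"
  shows "mob a b c d \<circ> mob e f g h = mob (a*e+b*g) (a*f+b*h) (c*e+d*g) (c*f+d*h)"
proof
  fix p show "(mob a b c d \<circ> mob e f g h) p = mob (a*e+b*g) (a*f+b*h) (c*e+d*g) (c*f+d*h) p"
  proof (cases p)
    case None
    show ?thesis
    proof (cases "g = 0")
      case True
      then have "e \<noteq> 0" "h \<noteq> 0" using assms by auto
      then show ?thesis using None True by (auto simp: mob_None)
    next
      case False
      have eq: "c * e / g + d = (c*e+d*g)/g" using False by (simp add: field_simps)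
      have eq2: "a * e / g + b = (a*e+b*g)/g" using False by (simp add: field_simps)
      show ?thesis using None False by (auto simp: mob_None mob_Some eq eq2)
    qed
  next
    case (Some z)
    show ?thesis
    proof (cases "g*z+h = 0")
      case True
      then have h: "h = - g*z" by algebra
      have "e*h - f*g = -g*(e*z+f)" unfolding h by algebra
      then have ez: "e*z+f \<noteq> 0" using assms by auto
      have den: "(c*e+d*g)*z + (c*f+d*h) = c*(e*z+f)" unfolding h by (simp add: algebra_simps)
      have num: "(a*e+b*g)*z + (a*f+b*h) = a*(e*z+f)" unfolding h by (simp add: algebra_simps)
      show ?thesis using Some True ez by (auto simp: mob_None mob_Some den num)
    next
      case False
      have den: "c * (e * z + f) / (g * z + h) + d = ((c*e+d*g)*z + (c*f+d*h)) / (g*z+h)"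
        using False by (simp add: field_simps)
      have num: "a * (e * z + f) / (g * z + h) + b = ((a*e+b*g)*z + (a*f+b*h)) / (g*z+h)"
        using False by (simp add: field_simps)
      show ?thesis using Some False by (auto simp: mob_Some den num)
    qed
  qed
qed

lemma moeb_mult:
  assumes "det B \<noteq> 0"
  shows "moeb (A ** B) = moeb A \<circ> moeb B"
proof -
  obtain a b c d where A: "A = mat2 a b c d" using mat2_eta by blast
  obtain e f g h where B: "B = mat2 e f g h" using mat2_eta by blast
  show ?thesis using assms unfolding A B mat2_mult moeb_mat2 det_mat2
    by (simp add: mob_comp)
qed

lemma moeb_one: "moeb (mat 1) = id"
  by (auto simp: mat1_mat2 moeb_mat2 mob_def fun_eq_iff split: option.splits)

definition minv :: "complex^2^2 \<Rightarrow> complex^2^2" where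
  "minv A = (let D = det A in mat2 (A$2$2/D) (-A$1$2/D) (-A$2$1/D) (A$1$1/D))"

lemma minv_mat2_right: assumes "D = a*d - b*c" "D \<noteq> 0" shows
   "mat2 a b c d ** mat2 (d/D) (-b/D) (-c/D) (a/D) = mat2 1 0 0 1"
proof -
  have "a*(d/D) + b*(-c/D) = (a*d-b*c)/D" "c*(-b/D) + d*(a/D) = (a*d-b*c)/D"
    "a*(-b/D) + b*(a/D) = 0" "c*(d/D) + d*(-c/D) = 0"
    by (simp_all add: diff_divide_distrib add_divide_distrib mult.commute)
  then show ?thesis unfolding mat2_mult mat2_eq_iff using assms by simp
qed

lemma minv_mat2_left: assumes "D = a*d - b*c" "D \<noteq> 0" shows
   "mat2 (d/D) (-b/D) (-c/D) (a/D) ** mat2 a b c d = mat2 1 0 0 1"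
proof -
  have "d/D*a + -b/D*c = (a*d-b*c)/D" "-c/D*b + a/D*d = (a*d-b*c)/D"
    "d/D*b + -b/D*d = 0" "-c/D*a + a/D*c = 0"
    by (simp_all add: diff_divide_distrib add_divide_distrib mult.commute)
  then show ?thesis unfolding mat2_mult mat2_eq_iff using assms by simp
qed

lemma minv_right: "det A \<noteq> 0 \<Longrightarrow> A ** minv A = mat 1"
  using minv_mat2_right[of "det A" "A$1$1" "A$2$2" "A$1$2" "A$2$1"] mat2_eta[of A]
  by (simp add: minv_def Let_def mat1_mat2 det_2)

lemma minv_left: "det A \<noteq> 0 \<Longrightarrow> minv A ** A = mat 1"
  using minv_mat2_left[of "det A" "A$1$1" "A$2$2" "A$1$2" "A$2$1"] mat2_eta[of A]
  by (simp add: minv_def Let_def mat1_mat2 det_2)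

lemma det_minv: "det A \<noteq> 0 \<Longrightarrow> det (minv A) = 1 / det A"
  using det_mul[of A "minv A"] minv_right[of A] by (simp add: field_simps)

lemma moeb_bij:
  assumes "det A \<noteq> 0"
  shows "bij (moeb A)" and "inv (moeb A) = moeb (minv A)"
proof -
  have dm: "det (minv A) \<noteq> 0" using det_minv[OF assms] assms by simp
  have 1: "moeb A \<circ> moeb (minv A) = id"
    using moeb_mult[OF dm, of A] minv_right[OF assms] moeb_one by simp
  have 2: "moeb (minv A) \<circ> moeb A = id"
    using moeb_mult[OF assms, of "minv A"] minv_left[OF assms] moeb_one by simp
  show "bij (moeb A)" using 1 2 o_bij by blast
  show "inv (moeb A) = moeb (minv A)" using 1 2 inv_unique_comp by blast
qed

definition affm :: "complex \<Rightarrow> complex \<Rightarrow> pt \<Rightarrow> pt" where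
  "affm a b = (\<lambda>p. case p of None \<Rightarrow> None | Some z \<Rightarrow> Some (a*z+b))"

lemma affm_None [simp]: "affm a b None = None" and affm_Some [simp]: "affm a b (Some z) = Some (a*z+b)"
  by (simp_all add: affm_def)

lemma affm_comp: "affm a b \<circ> affm c d = affm (a*c) (a*d+b)"
  by (auto simp: affm_def fun_eq_iff algebra_simps split: option.splits)

lemma affm_id: "affm 1 0 = id"
  by (auto simp: affm_def fun_eq_iff split: option.splits)

lemma affm_eq_id: "affm a b = id \<longleftrightarrow> a = 1 \<and> b = 0"
proof
  assume "affm a b = id"
  then have "affm a b (Some 0) = Some 0" "affm a b (Some 1) = Some 1" by simp_all
  then show "a = 1 \<and> b = 0" by simp
qed (simp add: affm_id)

lemma affm_inj: "affm a b = affm c d \<Longrightarrow> a = c \<and> b = d"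
proof -
  assume h: "affm a b = affm c d"
  have "affm a b (Some 0) = affm c d (Some 0)" "affm a b (Some 1) = affm c d (Some 1)" using h by simp_all
  then show ?thesis by simp
qed

lemma affm_pow: "affm a 0 ^^ n = affm (a^n) 0"
  by (induction n) (simp_all add: affm_id affm_comp mult.commute)

lemma mob_affm: "d \<noteq> 0 \<Longrightarrow> mob a b 0 d = affm (a/d) (b/d)"
  by (auto simp: mob_def affm_def fun_eq_iff add_divide_distrib split: option.splits)

definition coef :: "(pt \<Rightarrow> pt) \<Rightarrow> complex" where
  "coef f = the (f (Some 1)) - the (f (Some 0))"

lemma coef_affm [simp]: "coef (affm a b) = a"
  by (simp add: coef_def)

lemma fixNone:
  assumes "det X \<noteq> 0" "moeb X None = None"
  shows "moeb X = affm (X$1$1/X$2$2) (X$1$2/X$2$2)" "X$1$1/X$2$2 \<noteq> 0"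
proof -
  obtain a b c d where X: "X = mat2 a b c d" using mat2_eta by blast
  have c: "c = 0" using assms(2) unfolding X moeb_mat2 mob_None by (auto split: if_splits)
  have ad: "a \<noteq> 0" "d \<noteq> 0" using assms(1) unfolding X det_mat2 c by auto
  show "moeb X = affm (X$1$1/X$2$2) (X$1$2/X$2$2)" unfolding X moeb_mat2 c mob_affm[OF ad(2)] by simp
  show "X$1$1/X$2$2 \<noteq> 0" using ad X by simp
qed

definition cm :: "pt \<Rightarrow> pt \<Rightarrow> complex^2^2" where
  "cm z0 z1 = (case z1 of None \<Rightarrow> mat2 1 (the z0) 0 1
     | Some u \<Rightarrow> (case z0 of None \<Rightarrow> mat2 u (-1) 1 0 | Some w \<Rightarrow> mat2 u w 1 1))"

lemma cm_props:
  assumes "z0 \<noteq> z1"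
  shows "det (cm z0 z1) \<noteq> 0" "moeb (cm z0 z1) None = z1" "moeb (cm z0 z1) (Some 0) = z0"
  using assms
  by (auto simp: cm_def moeb_mat2 det_mat2 mob_def split: option.splits)

lemma det_conj: "det M \<noteq> 0 \<Longrightarrow> det (minv M ** X ** M) = det X"
  by (simp add: det_mul det_minv)

lemma det_conj': "det M \<noteq> 0 \<Longrightarrow> det (M ** X ** minv M) = det X"
  by (simp add: det_mul det_minv)

locale kl =
  fixes \<Gamma> :: "(pt \<Rightarrow> pt) set"
  assumes klein: "kleinian \<Gamma>" and tf: "torsion_free \<Gamma>"
begin

lemma sub: "is_subgroup_PGL2 \<Gamma>" using klein by (simp add: kleinian_def)

lemma id_in [simp]: "id \<in> \<Gamma>" using sub by (simp add: is_subgroup_PGL2_def)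
lemma comp_in [intro]: "g \<in> \<Gamma> \<Longrightarrow> h \<in> \<Gamma> \<Longrightarrow> g \<circ> h \<in> \<Gamma>" using sub by (simp add: is_subgroup_PGL2_def)
lemma inv_in [intro]: "g \<in> \<Gamma> \<Longrightarrow> inv g \<in> \<Gamma>" using sub by (simp add: is_subgroup_PGL2_def)

lemma gam_moeb: "g \<in> \<Gamma> \<Longrightarrow> \<exists>A. det A \<noteq> 0 \<and> g = moeb A"
  using sub by (auto simp: is_subgroup_PGL2_def PGL2_def)

lemma bij_g: "g \<in> \<Gamma> \<Longrightarrow> bij g"
proof -
  assume "g \<in> \<Gamma>"
  then obtain A where "det A \<noteq> 0" "g = moeb A" using gam_moeb by blast
  then show ?thesis using moeb_bij(1) by simp
qed

lemma inv_l [simp]: "g \<in> \<Gamma> \<Longrightarrow> inv g (g x) = x"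
  using bij_g bij_is_inj inv_f_f by metis
lemma inv_r [simp]: "g \<in> \<Gamma> \<Longrightarrow> g (inv g x) = x"
  using bij_g bij_is_surj surj_f_inv_f by metis
lemma inv_lc [simp]: "g \<in> \<Gamma> \<Longrightarrow> inv g \<circ> g = id"
  by (simp add: fun_eq_iff)
lemma inv_rc [simp]: "g \<in> \<Gamma> \<Longrightarrow> g \<circ> inv g = id"
  by (simp add: fun_eq_iff)
lemma inj_g: "g \<in> \<Gamma> \<Longrightarrow> g x = g y \<longleftrightarrow> x = y"
  by (metis inv_l)
lemma inv_comp: "g \<in> \<Gamma> \<Longrightarrow> h \<in> \<Gamma> \<Longrightarrow> inv (g \<circ> h) = inv h \<circ> inv g"
  by (simp add: bij_g o_inv_distrib)
lemma inv_inv: "g \<in> \<Gamma> \<Longrightarrow> inv (inv g) = g"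
  by (simp add: bij_g inv_inv_eq)
lemma pow_in: "g \<in> \<Gamma> \<Longrightarrow> g ^^ n \<in> \<Gamma>"
  by (induction n) auto

lemma inv_eq: "g \<in> \<Gamma> \<Longrightarrow> inv g x = y \<longleftrightarrow> x = g y"
  by (metis inv_l inv_r)

end

lemma tendsto_mm:
  fixes X :: "'b \<Rightarrow> complex^2^2"
  assumes "(X \<longlongrightarrow> X0) F"
  shows "((\<lambda>n. M ** X n ** N) \<longlongrightarrow> M ** X0 ** N) F"
proof (rule vec_tendstoI)
  fix i
  show "((\<lambda>n. (M ** X n ** N) $ i) \<longlongrightarrow> (M ** X0 ** N) $ i) F"
  proof (rule vec_tendstoI)
    fix j
    have e: "\<And>k l. ((\<lambda>n. X n $ k $ l) \<longlongrightarrow> X0 $ k $ l) F"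
      by (intro tendsto_vec_nth assms)
    show "((\<lambda>n. (M ** X n ** N) $ i $ j) \<longlongrightarrow> (M ** X0 ** N) $ i $ j) F"
      unfolding matrix_matrix_mult_def vec_lambda_beta
      apply (rule tendsto_sum) apply (rule tendsto_mult_right) apply (rule tendsto_sum)
      apply (rule tendsto_mult_left) apply (rule e) done
  qed
qed

lemma tendsto_mat2:
  assumes "(a \<longlongrightarrow> a0) F" "(b \<longlongrightarrow> b0) F" "(c \<longlongrightarrow> c0) F" "(d \<longlongrightarrow> d0) F"
  shows "((\<lambda>n. mat2 (a n) (b n) (c n) (d n)) \<longlongrightarrow> mat2 a0 b0 c0 d0) F"
proof (rule vec_tendstoI)
  fix i :: 2
  show "((\<lambda>n. mat2 (a n) (b n) (c n) (d n) $ i) \<longlongrightarrow> mat2 a0 b0 c0 d0 $ i) F"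
  proof (rule vec_tendstoI)
    fix j :: 2
    show "((\<lambda>n. mat2 (a n) (b n) (c n) (d n) $ i $ j) \<longlongrightarrow> mat2 a0 b0 c0 d0 $ i $ j) F"
      using assms exhaust_2[of i] exhaust_2[of j] by auto
  qed
qed

context kl
begin

lemma disc_seq:
  assumes M: "det M \<noteq> 0" and lim: "X \<longlonglongrightarrow> mat 1" and d1: "\<And>n. det (X n) = 1"
    and inG: "\<And>n. moeb M \<circ> moeb (X n) \<circ> moeb (minv M) \<in> \<Gamma>"
  shows "\<exists>n. X n = mat 1"
proof -
  define P where "P = (\<Union>g\<in>\<Gamma>. sl_reps g)"
  have disc: "\<forall>A\<in>P. \<exists>e>0. \<forall>B\<in>P. B \<noteq> A \<longrightarrow> e \<le> dist A B"
    using klein unfolding kleinian_def discrete_PGL2_def P_def Let_def by blast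
  have I: "mat 1 \<in> P" unfolding P_def sl_reps_def using moeb_one id_in by force
  obtain e where e: "e > 0" "\<And>B. B \<in> P \<Longrightarrow> B \<noteq> mat 1 \<Longrightarrow> e \<le> dist (mat 1) B"
    using disc I by blast
  define B where "B n = M ** X n ** minv M" for n
  have dM: "det (minv M) \<noteq> 0" using det_minv[OF M] M by simp
  have BP: "B n \<in> P" for n
  proof -
    have "det (B n) = 1" unfolding B_def using det_conj'[OF M] d1 by simp
    moreover have "moeb (B n) = moeb M \<circ> moeb (X n) \<circ> moeb (minv M)"
    proof -
      have "det (X n ** minv M) \<noteq> 0" using d1 dM by (simp add: det_mul)
      then have "moeb (M ** (X n ** minv M)) = moeb M \<circ> moeb (X n ** minv M)" by (rule moeb_mult)
      also have "moeb (X n ** minv M) = moeb (X n) \<circ> moeb (minv M)" using dM by (rule moeb_mult)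
      finally show ?thesis unfolding B_def by (simp add: matrix_mul_assoc fun_eq_iff)
    qed
    ultimately show ?thesis unfolding P_def sl_reps_def using inG[of n] by force
  qed
  have "B \<longlonglongrightarrow> M ** mat 1 ** minv M" unfolding B_def by (rule tendsto_mm[OF lim])
  then have "B \<longlonglongrightarrow> mat 1" using minv_right[OF M] by simp
  then have "\<forall>\<^sub>F n in sequentially. dist (B n) (mat 1) < e" using e(1) tendstoD by blast
  then obtain n where "dist (B n) (mat 1) < e" using eventually_sequentially by auto
  then have "B n = mat 1" using e(2)[OF BP[of n]] by (auto simp: dist_commute)
  then have "minv M ** B n ** M = mat 1" using minv_left[OF M] by simp
  moreover have "minv M ** B n ** M = (minv M ** M) ** X n ** (minv M ** M)"
    unfolding B_def by (simp add: matrix_mul_assoc)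
  then have "minv M ** B n ** M = X n" using minv_left[OF M] by simp
  ultimately show ?thesis by auto
qed

definition conjg :: "pt \<Rightarrow> pt \<Rightarrow> (pt \<Rightarrow> pt) \<Rightarrow> (pt \<Rightarrow> pt)" where
  "conjg z0 z1 f = moeb (minv (cm z0 z1)) \<circ> f \<circ> moeb (cm z0 z1)"

context
  fixes z0 z1 :: pt assumes z01: "z0 \<noteq> z1"
begin

abbreviation "C \<equiv> cm z0 z1"
abbreviation "cj \<equiv> conjg z0 z1"

lemma dC: "det C \<noteq> 0" using cm_props[OF z01] by simp
lemma C_inv_l: "moeb (minv C) \<circ> moeb C = id"
  using moeb_mult[OF dC, of "minv C"] minv_left[OF dC] moeb_one by simp
lemma C_inv_r: "moeb C \<circ> moeb (minv C) = id"
proof -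
  have "det (minv C) \<noteq> 0" using det_minv[OF dC] dC by simp
  then show ?thesis using moeb_mult[of "minv C" C] minv_right[OF dC] moeb_one by simp
qed
lemma C_inv_l' [simp]: "moeb (minv C) (moeb C x) = x"
  using C_inv_l by (simp add: fun_eq_iff)
lemma C_inv_r' [simp]: "moeb C (moeb (minv C) x) = x"
  using C_inv_r by (simp add: fun_eq_iff)

lemma cj_comp: "cj (f \<circ> g) = cj f \<circ> cj g"
  by (simp add: conjg_def fun_eq_iff)
lemma cj_id: "cj id = id"
  by (simp add: conjg_def fun_eq_iff)
lemma cj_pow: "cj (f ^^ n) = cj f ^^ n"
proof (induction n)
  case 0
  show ?case by (simp add: conjg_def fun_eq_iff)
next
  case (Suc n)
  have "cj (f ^^ Suc n) = cj (f \<circ> f ^^ n)" by simp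
  also have "\<dots> = cj f \<circ> cj (f ^^ n)" by (rule cj_comp)
  finally show ?case using Suc.IH by (simp only: funpow.simps(2))
qed
lemma cj_back: "moeb C \<circ> cj f \<circ> moeb (minv C) = f"
  by (simp add: conjg_def fun_eq_iff)
lemma cj_inj: "cj f = cj g \<Longrightarrow> f = g"
  by (metis cj_back)
lemma cj_eq_id: "cj f = id \<longleftrightarrow> f = id"
  using cj_inj cj_id by metis

lemma cj_None: "cj f None = moeb (minv C) (f z1)"
  using cm_props[OF z01] by (simp add: conjg_def)
lemma cj_zero: "cj f (Some 0) = moeb (minv C) (f z0)"
  using cm_props[OF z01] by (simp add: conjg_def)
lemma minvC_z1: "moeb (minv C) z1 = None"
  using cm_props[OF z01] C_inv_l' by metis
lemma minvC_z0: "moeb (minv C) z0 = Some 0"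
  using cm_props[OF z01] C_inv_l' by metis
lemma minvC_inj: "moeb (minv C) x = moeb (minv C) y \<longleftrightarrow> x = y"
  by (metis C_inv_r')

lemma cj_fix1:
  assumes g: "g \<in> \<Gamma>" and fx: "g z1 = z1"
  shows "\<exists>\<alpha> \<beta>. \<alpha> \<noteq> 0 \<and> cj g = affm \<alpha> \<beta>"
proof -
  obtain A where A: "det A \<noteq> 0" "g = moeb A" using gam_moeb[OF g] by blast
  have dm: "det (minv C) \<noteq> 0" using det_minv[OF dC] dC by simp
  have "cj g = moeb (minv C ** A ** C)"
  proof -
    have "moeb (minv C ** (A ** C)) = moeb (minv C) \<circ> moeb (A ** C)"
      by (rule moeb_mult) (simp add: det_mul A dC)
    also have "moeb (A ** C) = moeb A \<circ> moeb C" by (rule moeb_mult[OF dC])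
    finally show ?thesis by (simp add: conjg_def A matrix_mul_assoc fun_eq_iff)
  qed
  moreover have "det (minv C ** A ** C) \<noteq> 0" by (simp add: det_mul A dC dm)
  moreover have "cj g None = None" using cj_None fx minvC_z1 by simp
  ultimately show ?thesis using fixNone by metis
qed

lemma cj_fix01:
  assumes g: "g \<in> \<Gamma>" and fx: "g z1 = z1" "g z0 = z0"
  shows "\<exists>\<alpha>. \<alpha> \<noteq> 0 \<and> cj g = affm \<alpha> 0"
proof -
  obtain \<alpha> \<beta> where ab: "\<alpha> \<noteq> 0" "cj g = affm \<alpha> \<beta>" using cj_fix1[OF g fx(1)] by blast
  have "cj g (Some 0) = Some 0" using cj_zero fx minvC_z0 by simp
  then have "\<beta> = 0" using ab by simp
  then show ?thesis using ab by blast
qed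

lemma fix0_iff: "g z0 = z0 \<longleftrightarrow> cj g (Some 0) = Some 0"
  using minvC_inj[of "g z0" z0] by (simp add: cj_zero minvC_z0)

lemma cj_inv_aff:
  assumes g: "g \<in> \<Gamma>" and fx: "g z1 = z1" and cg: "cj g = affm \<alpha> \<beta>" and a: "\<alpha> \<noteq> 0"
  shows "cj (inv g) = affm (1/\<alpha>) (-\<beta>/\<alpha>)"
proof -
  have "inv g z1 = z1" using fx g by (metis inv_l)
  then obtain \<alpha>' \<beta>' where ab: "\<alpha>' \<noteq> 0" "cj (inv g) = affm \<alpha>' \<beta>'" using cj_fix1 g by blast
  have "cj (inv g) \<circ> cj g = id" using g by (simp flip: cj_comp add: cj_id)
  then have "affm (\<alpha>'*\<alpha>) (\<alpha>'*\<beta>+\<beta>') = affm 1 0" using ab cg by (simp add: affm_comp affm_id)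
  then have "\<alpha>'*\<alpha> = 1" "\<alpha>'*\<beta>+\<beta>' = 0" using affm_inj by blast+
  then have a1: "\<alpha>' = 1/\<alpha>" using a by (simp add: field_simps)
  have "\<beta>' = - (\<alpha>'*\<beta>)" using \<open>\<alpha>'*\<beta>+\<beta>' = 0\<close> by (simp add: eq_neg_iff_add_eq_0 add.commute)
  then have "\<beta>' = -\<beta>/\<alpha>" using a1 by simp
  note a1 this
  then show ?thesis using ab by simp
qed

end

end

context kl
begin

context
  fixes z0 z1 :: pt assumes z01: "z0 \<noteq> z1"
begin

abbreviation "CC \<equiv> cm z0 z1"
abbreviation "cjj \<equiv> conjg z0 z1"

lemma ell:
  assumes u: "u \<in> \<Gamma>" "u z0 = z0" "u z1 = z1" and cu: "cjj u = affm a 0" and na: "norm a = 1"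
  shows "u = id"
proof -
  define \<nu> where "\<nu> = csqrt a"
  have nu2: "\<nu>^2 = a" unfolding \<nu>_def by simp
  have "norm \<nu> ^ 2 = 1" using na nu2 by (metis norm_power)
  then have nnu: "norm \<nu> = 1" using norm_ge_zero[of \<nu>] by (auto simp add: power2_eq_1_iff)
  then have nu0: "\<nu> \<noteq> 0" by auto
  have npow: "norm (\<nu>^n) = 1" for n by (simp add: norm_power nnu)
  have "bounded (range (\<lambda>n. \<nu>^n))" unfolding bounded_iff using npow by auto
  then obtain l r where r: "strict_mono (r::nat\<Rightarrow>nat)" and lim: "((\<lambda>n. \<nu>^n) \<circ> r) \<longlonglongrightarrow> l"
    using bounded_imp_convergent_subsequence by blast
  have lim': "(\<lambda>k. \<nu>^(r k)) \<longlonglongrightarrow> l" using lim by (simp add: o_def)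
  have "(\<lambda>k. norm (\<nu>^(r k))) \<longlonglongrightarrow> norm l" by (rule tendsto_norm[OF lim'])
  then have "(\<lambda>k. 1::real) \<longlonglongrightarrow> norm l" using npow by simp
  then have nl: "norm l = 1" using LIMSEQ_unique tendsto_const by metis
  then have l0: "l \<noteq> 0" by auto
  define m where "m k = r (Suc k) - r k" for k
  have mpos: "m k > 0" for k unfolding m_def using r by (simp add: strict_mono_def)
  have mpow: "\<nu>^(m k) = \<nu>^(r (Suc k)) / \<nu>^(r k)" for k
    unfolding m_def using r nu0 by (simp add: power_diff strict_mono_less_eq)
  have "(\<lambda>k. \<nu>^(r (Suc k))) \<longlonglongrightarrow> l" using LIMSEQ_Suc[OF lim'] .
  then have "(\<lambda>k. \<nu>^(r (Suc k)) / \<nu>^(r k)) \<longlonglongrightarrow> l / l" using lim' l0 by (intro tendsto_divide) auto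
  then have limm: "(\<lambda>k. \<nu>^(m k)) \<longlonglongrightarrow> 1" using l0 mpow by simp
  define X where "X k = mat2 (\<nu>^(m k)) 0 0 (1/\<nu>^(m k))" for k
  have "X \<longlonglongrightarrow> mat2 1 0 0 (1/1)" unfolding X_def
    by (intro tendsto_mat2 tendsto_const limm tendsto_divide) auto
  then have limX: "X \<longlonglongrightarrow> mat 1" by (simp add: mat1_mat2)
  have dX: "det (X k) = 1" for k unfolding X_def det_mat2 using nu0 by simp
  have mX: "moeb (X k) = cjj (u ^^ m k)" for k
  proof -
    have "moeb (X k) = affm (\<nu>^(m k) / (1/\<nu>^(m k))) (0 / (1/\<nu>^(m k)))"
      unfolding X_def moeb_mat2 using nu0 by (simp add: mob_affm)
    also have "\<nu>^(m k) / (1/\<nu>^(m k)) = a^(m k)"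
    proof -
      have "\<nu>^(m k) / (1/\<nu>^(m k)) = \<nu>^(m k) * \<nu>^(m k)" using nu0 by simp
      also have "\<dots> = (\<nu>^2)^(m k)" by (simp add: power2_eq_square power_mult_distrib)
      finally show ?thesis using nu2 by simp
    qed
    finally have "moeb (X k) = affm (a^(m k)) 0" by simp
    also have "\<dots> = cjj u ^^ m k" by (simp add: cu affm_pow)
    finally show ?thesis using cj_pow[OF z01] by simp
  qed
  have inG: "moeb CC \<circ> moeb (X k) \<circ> moeb (minv CC) \<in> \<Gamma>" for k
    unfolding mX cj_back[OF z01] using pow_in[OF u(1)] by simp
  obtain k where "X k = mat 1" using disc_seq[OF dC[OF z01] limX dX inG] by blast
  then have "\<nu>^(m k) = 1" unfolding X_def mat1_mat2 mat2_eq_iff by simp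
  then have "a^(m k) = 1" by (metis nu2 power_mult power_mult_distrib mult.commute power_one)
  then have "cjj (u ^^ m k) = id" using mX[of k] \<open>X k = mat 1\<close> moeb_one by simp
  then have "u ^^ m k = id" using cj_eq_id[OF z01] by simp
  then show "u = id" using tf u(1) mpos[of k] unfolding torsion_free_def by blast
qed


lemma cj_moeb:
  assumes g: "g \<in> \<Gamma>"
  shows "\<exists>X. det X \<noteq> 0 \<and> cjj g = moeb X"
proof -
  obtain A where A: "det A \<noteq> 0" "g = moeb A" using gam_moeb[OF g] by blast
  have dC': "det CC \<noteq> 0" using dC[OF z01] .
  have dm: "det (minv CC) \<noteq> 0" using det_minv[OF dC'] dC' by simp
  have "cjj g = moeb (minv CC ** A ** CC)"
  proof -
    have "moeb (minv CC ** (A ** CC)) = moeb (minv CC) \<circ> moeb (A ** CC)"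
      by (rule moeb_mult) (simp add: det_mul A dC')
    also have "moeb (A ** CC) = moeb A \<circ> moeb CC" by (rule moeb_mult[OF dC'])
    finally show ?thesis by (simp add: conjg_def A matrix_mul_assoc fun_eq_iff)
  qed
  moreover have "det (minv CC ** A ** CC) \<noteq> 0" by (simp add: det_mul A dC' dm)
  ultimately show ?thesis by blast
qed

lemma cj_apply: "cjj f (moeb (minv CC) w) = moeb (minv CC) (f w)"
  using C_inv_r'[OF z01] by (simp add: conjg_def)

lemma fix3:
  assumes u: "u \<in> \<Gamma>" "u z0 = z0" "u z1 = z1" "u w = w" and w: "w \<noteq> z0" "w \<noteq> z1"
  shows "u = id"
proof -
  obtain a where a: "a \<noteq> 0" "cjj u = affm a 0" using cj_fix01[OF z01 u(1) u(3) u(2)] by blast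
  have "moeb (minv CC) w \<noteq> None" using w minvC_z1[OF z01] minvC_inj[OF z01] by metis
  moreover have "moeb (minv CC) w \<noteq> Some 0" using w minvC_z0[OF z01] minvC_inj[OF z01] by metis
  ultimately obtain x where x: "moeb (minv CC) w = Some x" "x \<noteq> 0" by auto
  have "cjj u (Some x) = Some x" using cj_apply[of u w] x u(4) by simp
  then have "a * x = x" using a by simp
  then have "a = 1" using x(2) by (metis mult_cancel_right1)
  then have "cjj u = id" using a affm_id by simp
  then show ?thesis using cj_eq_id[OF z01] by simp
qed

lemma noswap:
  assumes g: "g \<in> \<Gamma>" "g z0 = z1" "g z1 = z0"
  shows False
proof -
  obtain X where X: "det X \<noteq> 0" "cjj g = moeb X" using cj_moeb[OF g(1)] by blast
  obtain a b c d where Xe: "X = mat2 a b c d" using mat2_eta by blast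
  have "cjj g None = Some 0" using cj_None[OF z01, of g] g minvC_z0[OF z01] by simp
  then have c: "c \<noteq> 0" "a = 0" using X Xe by (auto simp: moeb_mat2 mob_None split: if_splits)
  have "cjj g (Some 0) = None" using cj_zero[OF z01, of g] g minvC_z1[OF z01] by simp
  then have dd: "d = 0" using X Xe by (auto simp: moeb_mat2 mob_Some split: if_splits)
  have bc: "0*0 - b*c \<noteq> 0" using X(1) Xe c dd by (simp add: det_mat2)
  have "cjj (g \<circ> g) = mob 0 b c 0 \<circ> mob 0 b c 0" using X Xe c dd cj_comp[OF z01] by (simp add: moeb_mat2)
  also have "\<dots> = mob (b*c) 0 0 (c*b)" using mob_comp[OF bc, of 0 b c 0] by simp
  also have "\<dots> = id" using bc by (simp add: mob_affm mult.commute affm_id)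
  finally have "g \<circ> g = id" using cj_eq_id[OF z01] by simp
  then have "g ^^ 2 = id" by (simp add: numeral_2_eq_2)
  then have "g = id" using tf g(1) unfolding torsion_free_def by (metis zero_less_numeral)
  then show False using g z01 by simp
qed

lemma G1aux:
  assumes h: "h \<in> \<Gamma>" "h z0 = z0" "h z1 = z1" and ch: "cjj h = affm a 0" and a: "norm a < 1" "a \<noteq> 0" "a \<noteq> 1"
    and g: "g \<in> \<Gamma>" "g z1 = z1" and cg: "cjj g = affm \<alpha> \<beta>" "\<alpha> \<noteq> 0"
  shows "\<beta> = 0"
proof -
  define c where "c = g \<circ> h \<circ> inv g \<circ> inv h"
  have c_in: "c \<in> \<Gamma>" unfolding c_def using g h by blast
  have cig: "cjj (inv g) = affm (1/\<alpha>) (-\<beta>/\<alpha>)" using cj_inv_aff[OF z01 g cg] .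
  have cih: "cjj (inv h) = affm (1/a) 0" using cj_inv_aff[OF z01 h(1) h(3) ch a(2)] by simp
  define \<tau> where "\<tau> = \<beta> * (1 - a)"
  have cc: "cjj c = affm 1 \<tau>"
  proof -
    have "cjj c = affm \<alpha> \<beta> \<circ> affm a 0 \<circ> affm (1/\<alpha>) (-\<beta>/\<alpha>) \<circ> affm (1/a) 0"
      unfolding c_def by (simp add: cj_comp[OF z01] cg ch cig cih)
    also have "\<dots> = affm (\<alpha> * a * (1/\<alpha>) * (1/a)) (\<alpha> * (a * (1/\<alpha> * 0 + -\<beta>/\<alpha>) + 0) + \<beta>)"
      by (simp add: affm_comp o_assoc[symmetric])
    also have "\<dots> = affm 1 \<tau>" unfolding \<tau>_def using a cg by (simp add: field_simps)
    finally show ?thesis .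
  qed
  define k where "k n = h ^^ n \<circ> c \<circ> inv h ^^ n" for n
  have ck: "cjj (k n) = affm 1 (a^n * \<tau>)" for n
  proof -
    have "cjj (k n) = affm (a^n) 0 \<circ> affm 1 \<tau> \<circ> affm ((1/a)^n) 0"
      unfolding k_def by (simp add: cj_comp[OF z01] cj_pow[OF z01] ch cih cc affm_pow)
    also have "\<dots> = affm 1 (a^n * \<tau>)" using a by (simp add: affm_comp power_one_over field_simps)
    finally show ?thesis .
  qed
  define X where "X n = mat2 1 (a^n * \<tau>) 0 1" for n
  have "X \<longlonglongrightarrow> mat2 1 (0 * \<tau>) 0 1" unfolding X_def
    by (intro tendsto_mat2 tendsto_const tendsto_mult LIMSEQ_power_zero a(1))
  then have limX: "X \<longlonglongrightarrow> mat 1" by (simp add: mat1_mat2)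
  have dX: "det (X n) = 1" for n unfolding X_def det_mat2 by simp
  have mX: "moeb (X n) = cjj (k n)" for n unfolding X_def moeb_mat2 ck by (simp add: mob_affm)
  have kin: "k n \<in> \<Gamma>" for n unfolding k_def using pow_in h c_in by blast
  have inG: "moeb CC \<circ> moeb (X n) \<circ> moeb (minv CC) \<in> \<Gamma>" for n
    unfolding mX cj_back[OF z01] using kin by simp
  obtain n where "X n = mat 1" using disc_seq[OF dC[OF z01] limX dX inG] by blast
  then have "a^n * \<tau> = 0" unfolding X_def mat1_mat2 mat2_eq_iff by simp
  then have "\<tau> = 0" using a(2) by simp
  then show "\<beta> = 0" unfolding \<tau>_def using a(3) by simp
qed

lemma G1:
  assumes h: "h \<in> \<Gamma>" "h z0 = z0" "h z1 = z1" "h \<noteq> id" and g: "g \<in> \<Gamma>" "g z1 = z1"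
  shows "g z0 = z0"
proof -
  obtain a where a: "a \<noteq> 0" "cjj h = affm a 0" using cj_fix01[OF z01 h(1) h(3) h(2)] by blast
  obtain \<alpha> \<beta> where ab: "\<alpha> \<noteq> 0" "cjj g = affm \<alpha> \<beta>" using cj_fix1[OF z01 g] by blast
  have na: "norm a \<noteq> 1" using ell[OF h(1-3) a(2)] h(4) by blast
  have "\<beta> = 0"
  proof (cases "norm a < 1")
    case True
    then have "a \<noteq> 1" by auto
    then show ?thesis using G1aux[OF h(1-3) a(2) True a(1) _ g ab(2,1)] by blast
  next
    case False
    then have gt: "norm a > 1" using na by simp
    have hi: "inv h \<in> \<Gamma>" "inv h z0 = z0" "inv h z1 = z1" using h by (auto simp: inv_eq)
    have cih: "cjj (inv h) = affm (1/a) 0" using cj_inv_aff[OF z01 h(1) h(3) a(2) a(1)] by simp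
    have "norm (1/a) < 1" using gt by (simp add: norm_divide divide_less_eq)
    moreover have "1/a \<noteq> 1" using gt by auto
    ultimately show ?thesis using G1aux[OF hi cih _ _ _ g ab(2,1)] a(1) by simp
  qed
  then have "cjj g (Some 0) = Some 0" using ab by simp
  then show ?thesis using fix0_iff[OF z01] by blast
qed
end
end

definition supp :: "('k \<Rightarrow> int) \<Rightarrow> 'k set" where
  "supp f = {k. f k \<noteq> 0}"

definition LL :: "('k \<Rightarrow> int) \<Rightarrow> ('k \<Rightarrow> 'a::comm_ring_1) \<Rightarrow> 'a" where
  "LL c W = (\<Sum>k\<in>supp c. of_int (c k) * W k)"

lemma lin_LL: "lin \<phi> c = (\<lambda>l. LL c (\<lambda>k. \<phi> k l))"
  by (simp add: lin_def LL_def supp_def)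

lemma supp_delta [simp]: "supp (delta x) = {x}"
  by (auto simp: supp_def delta_def)

lemma LL_eq:
  assumes "finite S" "supp c \<subseteq> S"
  shows "LL c W = (\<Sum>k\<in>S. of_int (c k) * W k)"
  unfolding LL_def using assms by (intro sum.mono_neutral_left) (auto simp: supp_def)

lemma supp_diff: "supp (\<lambda>k. c k - d k) \<subseteq> supp c \<union> supp d"
  by (auto simp: supp_def)
lemma supp_add: "supp (\<lambda>k. c k + d k) \<subseteq> supp c \<union> supp d"
  by (auto simp: supp_def)

lemma LL_diff:
  assumes "finite (supp c)" "finite (supp d)"
  shows "LL (\<lambda>k. c k - d k) W = LL c W - LL d W"
proof -
  let ?S = "supp c \<union> supp d"
  have "LL (\<lambda>k. c k - d k) W = (\<Sum>k\<in>?S. of_int (c k - d k) * W k)"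
    using assms by (intro LL_eq[OF _ supp_diff]) auto
  also have "\<dots> = (\<Sum>k\<in>?S. of_int (c k) * W k) - (\<Sum>k\<in>?S. of_int (d k) * W k)"
    by (simp add: sum_subtractf left_diff_distrib)
  also have "\<dots> = LL c W - LL d W"
    using assms LL_eq[of ?S c W] LL_eq[of ?S d W] by simp
  finally show ?thesis .
qed

lemma LL_add:
  assumes "finite (supp c)" "finite (supp d)"
  shows "LL (\<lambda>k. c k + d k) W = LL c W + LL d W"
proof -
  let ?S = "supp c \<union> supp d"
  have "LL (\<lambda>k. c k + d k) W = (\<Sum>k\<in>?S. of_int (c k + d k) * W k)"
    using assms by (intro LL_eq[OF _ supp_add]) auto
  also have "\<dots> = (\<Sum>k\<in>?S. of_int (c k) * W k) + (\<Sum>k\<in>?S. of_int (d k) * W k)"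
    by (simp add: sum.distrib distrib_right)
  also have "\<dots> = LL c W + LL d W"
    using assms LL_eq[of ?S c W] LL_eq[of ?S d W] by simp
  finally show ?thesis .
qed

lemma LL_zero [simp]: "LL (\<lambda>_. 0) W = 0"
  by (simp add: LL_def supp_def)

lemma LL_delta [simp]: "LL (delta x) W = W x"
  unfolding LL_def supp_delta by (simp add: delta_def)

lemma LL_scale:
  "LL (\<lambda>k. n * c k) W = of_int n * LL c W"
proof (cases "n = 0")
  case True then show ?thesis by (simp add: LL_def supp_def)
next
  case False
  then have "supp (\<lambda>k. n * c k) = supp c" by (auto simp: supp_def)
  then show ?thesis by (simp add: LL_def sum_distrib_left mult.assoc)
qed

lemma finite_supp_zspan:
  assumes "x \<in> zspan B" "\<And>b. b \<in> B \<Longrightarrow> finite (supp b)"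
  shows "finite (supp x)"
  using assms(1)
proof induction
  case zspan_zero then show ?case by (simp add: supp_def)
next
  case (zspan_base b) then show ?case using assms(2) by blast
next
  case (zspan_diff x y)
  then have "finite (supp x \<union> supp y)" by simp
  then show ?case by (rule finite_subset[OF supp_diff])
qed

lemma supp_zspan:
  assumes "x \<in> zspan B"
  shows "supp x \<subseteq> \<Union> (supp ` B)"
  using assms
proof induction
  case zspan_zero then show ?case by (simp add: supp_def)
next
  case (zspan_base b) then show ?case by blast
next
  case (zspan_diff x y) then show ?case using supp_diff[of x y] by blast
qed

lemma zspan_mono: assumes "B \<subseteq> B'" "x \<in> zspan B" shows "x \<in> zspan B'"
  using assms(2)
proof induction
  case zspan_zero then show ?case by (rule zspan.zspan_zero)
next
  case (zspan_base b) then show ?case using assms(1) zspan.zspan_base by blast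
next
  case (zspan_diff x y) then show ?case using zspan.zspan_diff by blast
qed

lemma sum_nz: "(\<Sum>k\<in>S. f k) \<noteq> (0::'a::comm_monoid_add) \<Longrightarrow> \<exists>k\<in>S. f k \<noteq> 0"
proof (rule ccontr)
  assume a: "sum f S \<noteq> 0" "\<not> (\<exists>k\<in>S. f k \<noteq> 0)"
  then have "\<forall>k\<in>S. f k = 0" by blast
  then have "sum f S = 0" by simp
  then show False using a by simp
qed

lemma supp_lin: "supp (lin \<phi> c) \<subseteq> (\<Union>k\<in>supp c. supp (\<phi> k))"
proof
  fix l assume "l \<in> supp (lin \<phi> c)"
  then have "(\<Sum>k\<in>supp c. c k * \<phi> k l) \<noteq> 0" by (simp add: supp_def lin_def)
  then obtain k where "k \<in> supp c" "c k * \<phi> k l \<noteq> 0" using sum_nz by blast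
  then show "l \<in> (\<Union>k\<in>supp c. supp (\<phi> k))" by (auto simp: supp_def)
qed

lemma zspan_neg: "x \<in> zspan B \<Longrightarrow> (\<lambda>k. - x k) \<in> zspan B"
  using zspan_diff[OF zspan_zero, of x B] by simp

lemma zspan_add: "x \<in> zspan B \<Longrightarrow> y \<in> zspan B \<Longrightarrow> (\<lambda>k. x k + y k) \<in> zspan B"
  using zspan_diff[of x B "\<lambda>k. - y k"] zspan_neg[of y B] by simp

lemma zspan_nat_scale: "x \<in> zspan B \<Longrightarrow> (\<lambda>k. int n * x k) \<in> zspan B"
proof (induction n)
  case 0 then show ?case using zspan_zero by simp
next
  case (Suc n)
  then have "(\<lambda>k. int n * x k + x k) \<in> zspan B" using zspan_add by blast
  then show ?case by (simp add: algebra_simps)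
qed

lemma zspan_scale: "x \<in> zspan B \<Longrightarrow> (\<lambda>k. n * x k) \<in> zspan B"
proof (cases "n \<ge> 0")
  case True
  assume x: "x \<in> zspan B"
  then show ?thesis using zspan_nat_scale[OF x, of "nat n"] True by simp
next
  case False
  assume x: "x \<in> zspan B"
  have "(\<lambda>k. int (nat (-n)) * x k) \<in> zspan B" by (rule zspan_nat_scale[OF x])
  then have "(\<lambda>k. - (int (nat (-n)) * x k)) \<in> zspan B" by (rule zspan_neg)
  then show ?thesis using False by simp
qed

lemma zspan_sum:
  assumes "finite I" "\<And>i. i \<in> I \<Longrightarrow> f i \<in> zspan B"
  shows "(\<lambda>k. \<Sum>i\<in>I. f i k) \<in> zspan B"
  using assms
proof (induction I rule: finite_induct)
  case empty then show ?case using zspan_zero by simp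
next
  case (insert i I)
  then have "(\<lambda>k. f i k + (\<Sum>i\<in>I. f i k)) \<in> zspan B" by (intro zspan_add) auto
  then show ?case using insert by simp
qed

lemma zspan_eq: "x \<in> zspan B \<Longrightarrow> x = y \<Longrightarrow> y \<in> zspan B" by simp

lemma lin_delta: "lin \<phi> (delta x) = \<phi> x"
  by (simp add: lin_LL)

lemma lin_diff:
  assumes "finite (supp c)" "finite (supp d)"
  shows "lin \<phi> (\<lambda>k. c k - d k) = (\<lambda>l. lin \<phi> c l - lin \<phi> d l)"
  using assms by (simp add: lin_LL LL_diff)

lemma lin_add:
  assumes "finite (supp c)" "finite (supp d)"
  shows "lin \<phi> (\<lambda>k. c k + d k) = (\<lambda>l. lin \<phi> c l + lin \<phi> d l)"
  using assms by (simp add: lin_LL LL_add)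

lemma lin_zero [simp]: "lin \<phi> (\<lambda>_. 0) = (\<lambda>_. 0)"
  by (simp add: lin_LL)

lemma finite_supp_lin:
  assumes "finite (supp c)" "\<And>k. k \<in> supp c \<Longrightarrow> finite (supp (\<phi> k))"
  shows "finite (supp (lin \<phi> c))"
proof -
  have "supp (lin \<phi> c) \<subseteq> (\<Union>k\<in>supp c. supp (\<phi> k))" by (rule supp_lin)
  then show ?thesis using assms by (meson finite_UN_I finite_subset)
qed

lemma LL_lin:
  assumes fc: "finite (supp c)" and fp: "\<And>k. k \<in> supp c \<Longrightarrow> finite (supp (\<phi> k))"
  shows "LL (lin \<phi> c) W = LL c (\<lambda>k. LL (\<phi> k) W)"
proof -
  let ?T = "\<Union>k\<in>supp c. supp (\<phi> k)"
  have fT: "finite ?T" using fc fp by blast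
  have sub: "supp (lin \<phi> c) \<subseteq> ?T" by (rule supp_lin)
  have "LL (lin \<phi> c) W = (\<Sum>l\<in>?T. of_int (lin \<phi> c l) * W l)" using LL_eq[OF fT sub] .
  also have "\<dots> = (\<Sum>l\<in>?T. \<Sum>k\<in>supp c. of_int (c k) * (of_int (\<phi> k l) * W l))"
    by (simp add: lin_def supp_def sum_distrib_right mult.assoc)
  also have "\<dots> = (\<Sum>k\<in>supp c. of_int (c k) * (\<Sum>l\<in>?T. of_int (\<phi> k l) * W l))"
    by (subst sum.swap) (simp add: sum_distrib_left)
  also have "\<dots> = (\<Sum>k\<in>supp c. of_int (c k) * LL (\<phi> k) W)"
  proof (rule sum.cong[OF refl])
    fix k assume k: "k \<in> supp c"
    have "LL (\<phi> k) W = (\<Sum>l\<in>?T. of_int (\<phi> k l) * W l)" using k fT by (intro LL_eq) auto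
    then show "of_int (c k) * (\<Sum>l\<in>?T. of_int (\<phi> k l) * W l) = of_int (c k) * LL (\<phi> k) W" by simp
  qed
  also have "\<dots> = LL c (\<lambda>k. LL (\<phi> k) W)" by (simp add: LL_def)
  finally show ?thesis .
qed

lemma LL_zspan_zero:
  assumes "x \<in> zspan B" "\<And>b. b \<in> B \<Longrightarrow> finite (supp b)" "\<And>b. b \<in> B \<Longrightarrow> LL b W = 0"
  shows "LL x W = 0"
  using assms(1)
proof induction
  case zspan_zero then show ?case by simp
next
  case (zspan_base b) then show ?case using assms(3) by blast
next
  case (zspan_diff x y)
  have "finite (supp x)" "finite (supp y)" using zspan_diff.hyps finite_supp_zspan assms(2) by blast+
  then show ?case using zspan_diff.IH by (simp add: LL_diff)
qed

lemma LL_expand: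
  assumes "finite (supp c)"
  shows "c = (\<lambda>x. \<Sum>k\<in>supp c. c k * delta k x)"
proof
  fix x
  show "c x = (\<Sum>k\<in>supp c. c k * delta k x)"
  proof (cases "x \<in> supp c")
    case True
    then have "(\<Sum>k\<in>supp c. c k * delta k x) = c x" using assms
      by (simp add: delta_def if_distrib sum.delta' cong: if_cong)
    then show ?thesis by simp
  next
    case False
    then have "(\<Sum>k\<in>supp c. c k * delta k x) = 0" by (auto simp: delta_def intro!: sum.neutral)
    then show ?thesis using False by (simp add: supp_def)
  qed
qed

lemma perm2:
  assumes "\<tau> permutes {..Suc 0}"
  shows "(\<tau> = id) \<or> (\<tau> = Transposition.transpose 0 1)"
proof -
  have inS: "\<tau> x \<in> {..Suc 0} \<longleftrightarrow> x \<in> {..Suc 0}" for x using permutes_in_image[OF assms] .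
  have out: "x \<notin> {..Suc 0} \<Longrightarrow> \<tau> x = x" for x using permutes_not_in[OF assms] .
  have inj: "\<tau> x = \<tau> y \<Longrightarrow> x = y" for x y using permutes_inj[OF assms] by (simp add: inj_def)
  have t0: "\<tau> 0 = 0 \<or> \<tau> 0 = 1" using inS[of 0] by auto
  have t1: "\<tau> 1 = 0 \<or> \<tau> 1 = 1" using inS[of 1] by auto
  show ?thesis
  proof (cases "\<tau> 0 = 0")
    case True
    then have "\<tau> 1 = 1" using t1 inj[of 1 0] by auto
    then have "\<tau> = id" using True out by (auto simp: fun_eq_iff) (metis One_nat_def le_Suc_eq le_zero_eq)
    then show ?thesis by simp
  next
    case False
    then have a: "\<tau> 0 = 1" using t0 by simp
    then have b: "\<tau> 1 = 0" using t1 inj[of 1 0] by auto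
    have "\<tau> x = Transposition.transpose 0 1 x" for x
    proof (cases "x \<le> 1")
      case True
      then have "x = 0 \<or> x = 1" by auto
      then show ?thesis using a b by auto
    next
      case False
      then show ?thesis using out[of x] by (simp add: Transposition.transpose_def)
    qed
    then show ?thesis by auto
  qed
qed

lemma permute_tuple2: "permute_tuple \<tau> [a, b] = [[a,b] ! \<tau> 0, [a,b] ! \<tau> 1]"
  by (simp add: permute_tuple_def upt_conv_Cons)

lemma tuples1: "m \<in> tuples 1 \<longleftrightarrow> (\<exists>a b. m = [a, b] \<and> a \<noteq> b)"
  by (auto simp: tuples_def length_Suc_conv)

lemma tuples0: "m \<in> tuples 0 \<longleftrightarrow> (\<exists>a. m = [a])"
  by (auto simp: tuples_def length_Suc_conv)

lemma bar_d1: "bar_d ([g], m) = (\<lambda>y. delta ([], map (inv g) m) y - delta ([], m) y)"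
  by (simp add: bar_d_def fun_eq_iff)

lemma bar_d2: "bar_d ([g, k], m) = (\<lambda>y. delta ([k], map (inv g) m) y - delta ([g \<circ> k], m) y + delta ([g], m) y)"
  by (simp add: bar_d_def fun_eq_iff merge_at_def)

lemma coeff_bd2: "coeff_bd (gs, [a, b]) = (\<lambda>y. delta (gs, [b]) y - delta (gs, [a]) y)"
  by (simp add: coeff_bd_def fun_eq_iff omit_def numeral_2_eq_2 lessThan_Suc)

lemma finite_supp_delta [simp]: "finite (supp (delta x))" by simp

lemma supp_bar_d: "finite (supp (bar_d x))"
proof -
  obtain gs zs where x: "x = (gs, zs)" by fastforce
  let ?S = "{(tl gs, map (inv (hd gs)) zs), (butlast gs, zs)} \<union> (\<lambda>i. (merge_at i gs, zs)) ` {..<length gs - 1}"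
  have "supp (bar_d x) \<subseteq> ?S"
  proof
    fix y assume y: "y \<in> supp (bar_d x)"
    show "y \<in> ?S"
    proof (rule ccontr)
      assume "y \<notin> ?S"
      then have "bar_d x y = 0" unfolding x bar_d_def Let_def by (auto simp: delta_def intro!: sum.neutral)
      then show False using y by (simp add: supp_def)
    qed
  qed
  then show ?thesis by (rule finite_subset) auto
qed

lemma supp_coeff_bd: "finite (supp (coeff_bd x))"
proof -
  let ?S = "(\<lambda>i. (fst x, omit i (snd x))) ` {..<length (snd x)}"
  have "supp (coeff_bd x) \<subseteq> ?S"
  proof
    fix y assume y: "y \<in> supp (coeff_bd x)"
    show "y \<in> ?S"
    proof (rule ccontr)
      assume "y \<notin> ?S"
      then have "coeff_bd x y = 0" unfolding coeff_bd_def by (auto simp: delta_def intro!: sum.neutral)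
      then show False using y by (simp add: supp_def)
    qed
  qed
  then show ?thesis by (rule finite_subset) auto
qed

lemma finite_supp_chains: "c \<in> chains G k n \<Longrightarrow> finite (supp c)"
  unfolding chains_def by (erule finite_supp_zspan) auto

lemma finite_supp_rel: "c \<in> rel_chains G k n \<Longrightarrow> finite (supp c)"
  unfolding rel_chains_def
proof (erule finite_supp_zspan)
  fix b assume "b \<in> {\<lambda>x. delta (gs, zs) x - sign \<tau> * delta (gs, permute_tuple \<tau> zs) x |gs zs \<tau>.
             length gs = k \<and> set gs \<subseteq> G \<and> zs \<in> tuples n \<and> \<tau> permutes {..n}}"
  then obtain gs zs \<tau> where b: "b = (\<lambda>x. delta (gs, zs) x - sign \<tau> * delta (gs, permute_tuple \<tau> zs) x)" by blast
  have "supp b \<subseteq> {(gs, zs), (gs, permute_tuple \<tau> zs)}" unfolding b by (auto simp: supp_def delta_def)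
  then show "finite (supp b)" by (rule finite_subset) auto
qed

lemma LL_vanish: "(\<And>k. k \<in> supp c \<Longrightarrow> W k = 0) \<Longrightarrow> LL c W = 0"
  by (simp add: LL_def)

context kl
begin

definition D1 :: "(((pt \<Rightarrow> pt) list \<times> pt list) \<Rightarrow> int) set" where
  "D1 = {bar_d ([g, k], m) | g k m. g \<in> \<Gamma> \<and> k \<in> \<Gamma> \<and> m \<in> tuples 1}"

definition R1 :: "(((pt \<Rightarrow> pt) list \<times> pt list) \<Rightarrow> int) set" where
  "R1 = {(\<lambda>x. delta (gs, zs) x - sign \<tau> * delta (gs, permute_tuple \<tau> zs) x)
      | gs zs \<tau>. length gs = 1 \<and> set gs \<subseteq> \<Gamma> \<and> zs \<in> tuples 1 \<and> \<tau> permutes {..1}}"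

definition ZZ where "ZZ = zspan (D1 \<union> R1)"

lemma Z_R2:
  assumes "a \<in> \<Gamma>" "b \<in> \<Gamma>" "y \<in> tuples 1"
  shows "(\<lambda>z. delta ([b], map (inv a) y) z - delta ([a \<circ> b], y) z + delta ([a], y) z) \<in> ZZ"
proof -
  have "bar_d ([a, b], y) \<in> D1" unfolding D1_def using assms by blast
  then have "bar_d ([a, b], y) \<in> ZZ" unfolding ZZ_def by (blast intro: zspan_base)
  then show ?thesis by (simp add: bar_d2)
qed

lemma Z_R1:
  assumes "g \<in> \<Gamma>" "[p, q] \<in> tuples 1"
  shows "(\<lambda>z. delta ([g], [p, q]) z + delta ([g], [q, p]) z) \<in> ZZ"
proof -
  let ?t = "Transposition.transpose (0::nat) 1"
  have tp: "?t permutes {..1}" by (rule permutes_swap_id) auto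
  have "(\<lambda>x. delta ([g], [p,q]) x - sign ?t * delta ([g], permute_tuple ?t [p,q]) x) \<in> R1"
    unfolding R1_def using assms tp by (intro CollectI exI[of _ "[g]"] exI[of _ "[p,q]"] exI[of _ ?t]) auto
  moreover have "sign ?t = -1" by (simp add: sign_swap_id)
  moreover have "permute_tuple ?t [p,q] = [q,p]" by (simp add: permute_tuple2)
  ultimately have "(\<lambda>x. delta ([g], [p,q]) x - (-1) * delta ([g], [q,p]) x) \<in> R1" by simp
  then have "(\<lambda>x. delta ([g], [p,q]) x - (-1) * delta ([g], [q,p]) x) \<in> ZZ"
    unfolding ZZ_def by (intro zspan.zspan_base UnI2)
  then show ?thesis by simp
qed

lemma Z_id:
  assumes "y \<in> tuples 1"
  shows "delta ([id], y) \<in> ZZ"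
  using Z_R2[OF id_in id_in assms] by (simp add: inv_id)

lemma Z_diff: "x \<in> ZZ \<Longrightarrow> y \<in> ZZ \<Longrightarrow> (\<lambda>k. x k - y k) \<in> ZZ"
  unfolding ZZ_def by (rule zspan_diff)
lemma Z_add: "x \<in> ZZ \<Longrightarrow> y \<in> ZZ \<Longrightarrow> (\<lambda>k. x k + y k) \<in> ZZ"
  unfolding ZZ_def by (rule zspan_add)
lemma Z_zero: "(\<lambda>_. 0) \<in> ZZ"
  unfolding ZZ_def by (rule zspan_zero)
lemma Z_scale: "x \<in> ZZ \<Longrightarrow> (\<lambda>k. n * x k) \<in> ZZ"
  unfolding ZZ_def by (rule zspan_scale)
lemma Z_sum: "finite I \<Longrightarrow> (\<And>i. i \<in> I \<Longrightarrow> f i \<in> ZZ) \<Longrightarrow> (\<lambda>k. \<Sum>i\<in>I. f i k) \<in> ZZ"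
  unfolding ZZ_def by (rule zspan_sum)

lemma Z_B: "x \<in> ZZ \<Longrightarrow> x \<in> boundaries1 \<Gamma> 1"
  unfolding ZZ_def
proof (induction rule: zspan.induct)
  case zspan_zero
  have "(\<lambda>_. 0) \<in> chains \<Gamma> 2 1" "(\<lambda>_. 0) \<in> rel_chains \<Gamma> 1 1"
    unfolding chains_def rel_chains_def by (rule zspan.zspan_zero)+
  then show ?case unfolding boundaries1_def by force
next
  case (zspan_base b)
  then show ?case
  proof
    assume "b \<in> D1"
    then obtain g k m where b: "b = bar_d ([g, k], m)" "g \<in> \<Gamma>" "k \<in> \<Gamma>" "m \<in> tuples 1"
      unfolding D1_def by blast
    have "delta ([g, k], m) \<in> chains \<Gamma> 2 1" unfolding chains_def
      using b by (intro zspan.zspan_base CollectI exI[of _ "[g,k]"] exI[of _ m]) (auto simp: numeral_2_eq_2)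
    moreover have "(\<lambda>_. 0) \<in> rel_chains \<Gamma> 1 1" unfolding rel_chains_def by (rule zspan.zspan_zero)
    ultimately show ?thesis unfolding boundaries1_def
      by (intro CollectI exI[of _ "delta ([g, k], m)"] exI[of _ "\<lambda>_. 0"]) (simp add: lin_delta b(1))
  next
    assume "b \<in> R1"
    then have "b \<in> rel_chains \<Gamma> 1 1" unfolding rel_chains_def R1_def by (intro zspan.zspan_base) simp
    moreover have "(\<lambda>_. 0) \<in> chains \<Gamma> 2 1" unfolding chains_def by (rule zspan.zspan_zero)
    moreover have "b = (\<lambda>y. lin bar_d (\<lambda>_. 0) y + b y)" by simp
    ultimately show ?thesis unfolding boundaries1_def by blast
  qed
next
  case (zspan_diff x y)
  obtain b1 r1 where 1: "x = (\<lambda>y. lin bar_d b1 y + r1 y)" "b1 \<in> chains \<Gamma> 2 1" "r1 \<in> rel_chains \<Gamma> 1 1"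
    using zspan_diff.IH(1) unfolding boundaries1_def by blast
  obtain b2 r2 where 2: "y = (\<lambda>y. lin bar_d b2 y + r2 y)" "b2 \<in> chains \<Gamma> 2 1" "r2 \<in> rel_chains \<Gamma> 1 1"
    using zspan_diff.IH(2) unfolding boundaries1_def by blast
  have "(\<lambda>k. b1 k - b2 k) \<in> chains \<Gamma> 2 1" using 1(2) 2(2) unfolding chains_def by (rule zspan.zspan_diff)
  moreover have "(\<lambda>k. r1 k - r2 k) \<in> rel_chains \<Gamma> 1 1" using 1(3) 2(3) unfolding rel_chains_def by (rule zspan.zspan_diff)
  moreover have "(\<lambda>k. x k - y k) = (\<lambda>z. lin bar_d (\<lambda>k. b1 k - b2 k) z + (\<lambda>k. r1 k - r2 k) z)"
    using 1 2 finite_supp_chains[OF 1(2)] finite_supp_chains[OF 2(2)] by (simp add: lin_diff fun_eq_iff)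
  ultimately show ?case unfolding boundaries1_def
    by (intro CollectI exI[of _ "\<lambda>k. b1 k - b2 k"] exI[of _ "\<lambda>k. r1 k - r2 k"]) simp
qed

end

context kl
begin

definition Opm :: "pt list \<Rightarrow> pt list set" where
  "Opm m = {map g m | g. g \<in> \<Gamma>} \<union> {map g (rev m) | g. g \<in> \<Gamma>}"

definition rep :: "pt list \<Rightarrow> pt list" where
  "rep m = (SOME r. r \<in> Opm m)"

definition pos :: "pt list \<Rightarrow> bool" where
  "pos m \<longleftrightarrow> (\<exists>\<gamma>\<in>\<Gamma>. map \<gamma> (rep m) = m)"

definition nm :: "pt list \<Rightarrow> pt list" where
  "nm m = (if pos m then m else rev m)"

definition eps :: "pt list \<Rightarrow> int" where
  "eps m = (if pos m then 1 else -1)"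

definition tt :: "pt list \<Rightarrow> (pt \<Rightarrow> pt)" where
  "tt m = (SOME \<gamma>. \<gamma> \<in> \<Gamma> \<and> map \<gamma> (rep m) = nm m)"

lemma map_inv_map [simp]: "g \<in> \<Gamma> \<Longrightarrow> map (inv g) (map g m) = m"
  by (induction m) auto
lemma map_map_inv [simp]: "g \<in> \<Gamma> \<Longrightarrow> map g (map (inv g) m) = m"
  by (induction m) auto

lemma Opm_self: "m \<in> Opm m"
  unfolding Opm_def using id_in by (metis (mono_tags, lifting) UnI1 list.map_id mem_Collect_eq)

lemma Opm_trans: "x \<in> Opm r \<Longrightarrow> r \<in> Opm m \<Longrightarrow> x \<in> Opm m"
proof -
  assume x: "x \<in> Opm r" and r: "r \<in> Opm m"
  from r obtain g where g: "g \<in> \<Gamma>" "r = map g m \<or> r = map g (rev m)" unfolding Opm_def by blast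
  from x obtain h where h: "h \<in> \<Gamma>" "x = map h r \<or> x = map h (rev r)" unfolding Opm_def by blast
  have hg: "h \<circ> g \<in> \<Gamma>" using g h by blast
  have "x = map (h \<circ> g) m \<or> x = map (h \<circ> g) (rev m)"
    using g(2) h(2) by (auto simp: rev_map)
  then show ?thesis unfolding Opm_def using hg by blast
qed

lemma Opm_sym: "r \<in> Opm m \<Longrightarrow> m \<in> Opm r"
proof -
  assume r: "r \<in> Opm m"
  from r obtain g where g: "g \<in> \<Gamma>" "r = map g m \<or> r = map g (rev m)" unfolding Opm_def by blast
  have ig: "inv g \<in> \<Gamma>" using g by blast
  have "m = map (inv g) r \<or> m = map (inv g) (rev r)"
    using g by (auto simp: rev_map[symmetric])
  then show ?thesis unfolding Opm_def using ig by blast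
qed

lemma Opm_eq: "r \<in> Opm m \<Longrightarrow> Opm r = Opm m"
  using Opm_trans Opm_sym by blast

lemma rep_in: "rep m \<in> Opm m"
  unfolding rep_def using Opm_self by (rule someI)

lemma rep_eq: "x \<in> Opm m \<Longrightarrow> rep x = rep m"
  unfolding rep_def using Opm_eq by simp

lemma act_in: "g \<in> \<Gamma> \<Longrightarrow> map g m \<in> Opm m"
  unfolding Opm_def by blast
lemma rev_in: "rev m \<in> Opm m"
  unfolding Opm_def using id_in by (metis (mono_tags, lifting) UnI2 list.map_id mem_Collect_eq)

lemma rep_act: "g \<in> \<Gamma> \<Longrightarrow> rep (map g m) = rep m"
  using rep_eq act_in by blast
lemma rep_rev: "rep (rev m) = rep m"
  using rep_eq rev_in by blast
lemma rep_rep: "rep (rep m) = rep m"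
  using rep_eq rep_in by blast

lemma tuples_act: "g \<in> \<Gamma> \<Longrightarrow> m \<in> tuples 1 \<Longrightarrow> map g m \<in> tuples 1"
  unfolding tuples1 using inj_g by auto
lemma tuples_rev: "m \<in> tuples 1 \<Longrightarrow> rev m \<in> tuples 1"
  unfolding tuples1 by auto
lemma tuples_Opm: "m \<in> tuples 1 \<Longrightarrow> x \<in> Opm m \<Longrightarrow> x \<in> tuples 1"
  unfolding Opm_def using tuples_act tuples_rev by blast
lemma rep_tuples: "m \<in> tuples 1 \<Longrightarrow> rep m \<in> tuples 1"
  using tuples_Opm rep_in by blast

lemma pos_act: "g \<in> \<Gamma> \<Longrightarrow> pos (map g m) = pos m"
proof -
  assume g: "g \<in> \<Gamma>"
  have "(\<exists>\<gamma>\<in>\<Gamma>. map \<gamma> (rep m) = map g m) \<longleftrightarrow> (\<exists>\<gamma>\<in>\<Gamma>. map \<gamma> (rep m) = m)"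
  proof
    assume "\<exists>\<gamma>\<in>\<Gamma>. map \<gamma> (rep m) = map g m"
    then obtain \<gamma> where "\<gamma> \<in> \<Gamma>" "map \<gamma> (rep m) = map g m" by blast
    then have "map (inv g \<circ> \<gamma>) (rep m) = m" using g by (metis map_inv_map map_map)
    then show "\<exists>\<gamma>\<in>\<Gamma>. map \<gamma> (rep m) = m" using g \<open>\<gamma> \<in> \<Gamma>\<close> by blast
  next
    assume "\<exists>\<gamma>\<in>\<Gamma>. map \<gamma> (rep m) = m"
    then obtain \<gamma> where "\<gamma> \<in> \<Gamma>" "map \<gamma> (rep m) = m" by blast
    then have "map (g \<circ> \<gamma>) (rep m) = map g m" by (simp flip: map_map)
    then show "\<exists>\<gamma>\<in>\<Gamma>. map \<gamma> (rep m) = map g m" using g \<open>\<gamma> \<in> \<Gamma>\<close> by blast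
  qed
  then show ?thesis unfolding pos_def rep_act[OF g] .
qed

lemma pos_or_rev: "pos m \<or> pos (rev m)"
proof -
  obtain g where g: "g \<in> \<Gamma>" "rep m = map g m \<or> rep m = map g (rev m)"
    using rep_in unfolding Opm_def by blast
  have ig: "inv g \<in> \<Gamma>" using g by blast
  have "map (inv g) (rep m) = m \<or> map (inv g) (rep m) = rev m" using g by auto
  then show ?thesis unfolding pos_def rep_rev using ig by blast
qed

lemma not_pos_both:
  assumes m: "m \<in> tuples 1" shows "\<not> (pos m \<and> pos (rev m))"
proof
  assume "pos m \<and> pos (rev m)"
  then obtain \<gamma>1 \<gamma>2 where g: "\<gamma>1 \<in> \<Gamma>" "map \<gamma>1 (rep m) = m" "\<gamma>2 \<in> \<Gamma>" "map \<gamma>2 (rep m) = rev m"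
    unfolding pos_def rep_rev by blast
  obtain a b where ab: "m = [a, b]" "a \<noteq> b" using m tuples1 by blast
  let ?d = "\<gamma>2 \<circ> inv \<gamma>1"
  have d: "?d \<in> \<Gamma>" using g by blast
  have "rep m = map (inv \<gamma>1) m" using g by (metis map_inv_map)
  then have "map ?d m = rev m" using g by simp
  then have "?d a = b" "?d b = a" using ab by auto
  then show False using noswap[OF ab(2) d] by blast
qed

lemma pos_rev: "m \<in> tuples 1 \<Longrightarrow> pos (rev m) = (\<not> pos m)"
  using pos_or_rev[of m] not_pos_both[of m] by blast

lemma tt_props: "tt m \<in> \<Gamma> \<and> map (tt m) (rep m) = nm m"
proof -
  have "\<exists>\<gamma>. \<gamma> \<in> \<Gamma> \<and> map \<gamma> (rep m) = nm m"
  proof (cases "pos m")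
    case True then show ?thesis unfolding nm_def pos_def by auto
  next
    case False
    then have "pos (rev m)" using pos_or_rev by blast
    then show ?thesis using False unfolding nm_def pos_def rep_rev by auto
  qed
  then show ?thesis unfolding tt_def by (rule someI_ex)
qed

lemma nm_act: "g \<in> \<Gamma> \<Longrightarrow> nm (map g m) = map g (nm m)"
  unfolding nm_def using pos_act by (simp add: rev_map)
lemma eps_act: "g \<in> \<Gamma> \<Longrightarrow> eps (map g m) = eps m"
  unfolding eps_def using pos_act by simp
lemma nm_rev: "m \<in> tuples 1 \<Longrightarrow> nm (rev m) = nm m"
  unfolding nm_def using pos_rev by simp
lemma eps_rev: "m \<in> tuples 1 \<Longrightarrow> eps (rev m) = - eps m"
  unfolding eps_def using pos_rev by simp
lemma tt_rev: "m \<in> tuples 1 \<Longrightarrow> tt (rev m) = tt m"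
  unfolding tt_def using nm_rev rep_rev by simp

end

context kl
begin

definition FF :: "pt list \<Rightarrow> (((pt \<Rightarrow> pt) list \<times> pt list) \<Rightarrow> int)" where
  "FF y = (\<lambda>z. eps y * delta ([tt y], nm y) z)"

definition sx :: "(pt \<Rightarrow> pt) \<Rightarrow> pt list \<Rightarrow> (pt \<Rightarrow> pt)" where
  "sx g m = inv (tt m) \<circ> g \<circ> tt (map (inv g) m)"

lemma Z_eq: "x \<in> ZZ \<Longrightarrow> x = y \<Longrightarrow> y \<in> ZZ" by simp

lemma nm_tuples: "m \<in> tuples 1 \<Longrightarrow> nm m \<in> tuples 1"
  unfolding nm_def using tuples_rev by simp

lemma red1:
  assumes g: "g \<in> \<Gamma>" and m: "m \<in> tuples 1"
  shows "sx g m \<in> \<Gamma>" "map (sx g m) (rep m) = rep m"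
    "(\<lambda>z. delta ([g], m) z - (eps m * delta ([sx g m], rep m) z + FF m z - FF (map (inv g) m) z)) \<in> ZZ"
proof -
  define r t q t' s n n' where defs: "r = rep m" "t = tt m" "q = map (inv g) m" "t' = tt q"
    "s = inv t \<circ> g \<circ> t'" "n = nm m" "n' = nm q"
  have ig: "inv g \<in> \<Gamma>" using g by blast
  have rq: "rep q = r" unfolding defs using rep_act[OF ig] by simp
  have nn': "n' = map (inv g) n" unfolding defs using nm_act[OF ig] by simp
  have eq: "eps q = eps m" unfolding defs using eps_act[OF ig] by simp
  have t: "t \<in> \<Gamma>" "map t r = n" unfolding defs using tt_props by auto
  have t': "t' \<in> \<Gamma>" "map t' r = n'" using tt_props[of q] rq unfolding defs by auto
  have s: "s \<in> \<Gamma>" unfolding defs(5) using g t(1) t'(1) by blast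
  have itn: "map (inv t) n = r" using t by (metis map_inv_map)
  have it'n: "map (inv t') n' = r" using t' by (metis map_inv_map)
  have sr: "map s r = r"
  proof -
    have "map s r = map (inv t) (map g (map t' r))" unfolding defs(5) by simp
    also have "\<dots> = r" using t' nn' g itn by simp
    finally show ?thesis .
  qed
  have isr: "map (inv s) r = r" using s sr by (metis map_inv_map)
  have gdec: "t \<circ> (s \<circ> inv t') = g" unfolding defs(5) using t t' by (simp add: fun_eq_iff)
  have tt'id: "t' \<circ> inv t' = id" using t' by simp
  have rT: "r \<in> tuples 1" unfolding defs using rep_tuples m by simp
  have nT: "n \<in> tuples 1" unfolding defs using nm_tuples m by simp
  have n'T: "n' \<in> tuples 1" unfolding defs using nm_tuples tuples_act[OF ig m] by simp
  have A: "(\<lambda>z. delta ([s \<circ> inv t'], r) z - delta ([g], n) z + delta ([t], n) z) \<in> ZZ"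
    using Z_R2[OF t(1) comp_in[OF s inv_in[OF t'(1)]] nT] itn gdec by simp
  have B: "(\<lambda>z. delta ([inv t'], r) z - delta ([s \<circ> inv t'], r) z + delta ([s], r) z) \<in> ZZ"
    using Z_R2[OF s inv_in[OF t'(1)] rT] isr by simp
  have C: "(\<lambda>z. delta ([inv t'], r) z - delta ([id], n') z + delta ([t'], n') z) \<in> ZZ"
    using Z_R2[OF t'(1) inv_in[OF t'(1)] n'T] it'n tt'id by simp
  have D: "delta ([id], n') \<in> ZZ" using Z_id[OF n'T] .
  have "(\<lambda>k. - 1 * ((\<lambda>k. (\<lambda>k. (\<lambda>z. delta ([s \<circ> inv t'], r) z - delta ([g], n) z + delta ([t], n) z) k +
        (\<lambda>z. delta ([inv t'], r) z - delta ([s \<circ> inv t'], r) z + delta ([s], r) z) k) k -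
        (\<lambda>z. delta ([inv t'], r) z - delta ([id], n') z + delta ([t'], n') z) k) k - delta ([id], n') k)) \<in> ZZ"
    by (intro Z_scale Z_diff Z_add A B C D)
  then have key: "(\<lambda>z. delta ([g], n) z - delta ([t], n) z - delta ([s], r) z + delta ([t'], n') z) \<in> ZZ"
    by (rule Z_eq) (simp add: fun_eq_iff algebra_simps)
  show "sx g m \<in> \<Gamma>" using s unfolding sx_def defs .
  show "map (sx g m) (rep m) = rep m" using sr unfolding sx_def defs .
  have sxs: "sx g m = s" unfolding sx_def defs ..
  have FFm: "FF m = (\<lambda>z. eps m * delta ([t], n) z)" unfolding FF_def defs ..
  have FFq: "FF q = (\<lambda>z. eps m * delta ([t'], n') z)" unfolding FF_def defs using eq[unfolded defs] by simp
  show "(\<lambda>z. delta ([g], m) z - (eps m * delta ([sx g m], rep m) z + FF m z - FF (map (inv g) m) z)) \<in> ZZ"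
  proof (cases "pos m")
    case True
    then have "n = m" "eps m = 1" unfolding defs nm_def eps_def by simp_all
    then show ?thesis using key unfolding FFm FFq[unfolded defs(3)] sxs
      by (simp add: defs(1) algebra_simps)
  next
    case False
    then have nr: "n = rev m" "eps m = -1" unfolding defs nm_def eps_def by simp_all
    obtain a b where ab: "m = [a, b]" using m tuples1 by blast
    have R: "(\<lambda>z. delta ([g], m) z + delta ([g], n) z) \<in> ZZ"
      using Z_R1[OF g, of a b] m ab nr by simp
    have "(\<lambda>k. (\<lambda>z. delta ([g], m) z + delta ([g], n) z) k -
       (\<lambda>z. delta ([g], n) z - delta ([t], n) z - delta ([s], r) z + delta ([t'], n') z) k) \<in> ZZ"
      by (rule Z_diff[OF R key])
    then show ?thesis unfolding FFm FFq[unfolded defs(3)] sxs nr(2)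
      by (rule Z_eq) (simp add: defs(1) fun_eq_iff algebra_simps)
  qed
qed

end

context kl
begin

lemma supp_chains11:
  assumes "c \<in> chains \<Gamma> 1 1" "x \<in> supp c"
  shows "\<exists>g m. x = ([g], m) \<and> g \<in> \<Gamma> \<and> m \<in> tuples 1"
proof -
  have "x \<in> \<Union> (supp ` {delta (gs, zs) |gs zs. length gs = 1 \<and> set gs \<subseteq> \<Gamma> \<and> zs \<in> tuples 1})"
    using supp_zspan assms unfolding chains_def by blast
  then obtain gs zs where "x = (gs, zs)" "length gs = 1" "set gs \<subseteq> \<Gamma>" "zs \<in> tuples 1" by auto
  then show ?thesis by (auto simp: length_Suc_conv)
qed

definition Stg :: "pt list \<Rightarrow> (((pt \<Rightarrow> pt) list \<times> pt list) \<Rightarrow> int) set" where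
  "Stg r = {delta ([u], r) | u. u \<in> \<Gamma> \<and> map u r = r}"

lemma good:
  assumes v: "v \<in> zspan (Stg r)" and r: "r \<in> tuples 1"
  shows "\<exists>u. u \<in> \<Gamma> \<and> map u r = r \<and> (\<lambda>z. v z - delta ([u], r) z) \<in> ZZ"
  using v
proof induction
  case zspan_zero
  have "(\<lambda>z. (\<lambda>_. 0) z - delta ([id], r) z) \<in> ZZ" by (rule Z_diff[OF Z_zero Z_id[OF r]])
  moreover have "map id r = r" by simp
  ultimately show ?case using id_in by blast
next
  case (zspan_base b)
  then obtain u where "b = delta ([u], r)" "u \<in> \<Gamma>" "map u r = r" unfolding Stg_def by blast
  then show ?case using Z_zero by (intro exI[of _ u]) simp
next
  case (zspan_diff x y)
  obtain u1 where u1: "u1 \<in> \<Gamma>" "map u1 r = r" "(\<lambda>z. x z - delta ([u1], r) z) \<in> ZZ" using zspan_diff.IH(1) by blast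
  obtain u2 where u2: "u2 \<in> \<Gamma>" "map u2 r = r" "(\<lambda>z. y z - delta ([u2], r) z) \<in> ZZ" using zspan_diff.IH(2) by blast
  define w where "w = u1 \<circ> inv u2"
  have w: "w \<in> \<Gamma>" unfolding w_def using u1 u2 by blast
  have wr: "map w r = r" unfolding w_def using u1 u2 by (metis list.map_comp map_inv_map)
  have iwr: "map (inv w) r = r" using w wr by (metis map_inv_map)
  have wu: "w \<circ> u2 = u1" unfolding w_def using u2 by (simp add: o_assoc[symmetric])
  have R: "(\<lambda>z. delta ([u2], r) z - delta ([u1], r) z + delta ([w], r) z) \<in> ZZ"
    using Z_R2[OF w u2(1) r] iwr wu by simp
  have "(\<lambda>k. (\<lambda>k. (\<lambda>z. x z - delta ([u1], r) z) k - (\<lambda>z. y z - delta ([u2], r) z) k) k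
     - (\<lambda>z. delta ([u2], r) z - delta ([u1], r) z + delta ([w], r) z) k) \<in> ZZ"
    by (intro Z_diff u1(3) u2(3) R)
  then have "(\<lambda>z. (\<lambda>k. x k - y k) z - delta ([w], r) z) \<in> ZZ"
    by (rule Z_eq) (simp add: fun_eq_iff algebra_simps)
  then show ?case using w wr by blast
qed

lemma LL_two: "LL (\<lambda>x. delta a x - n * delta b x) W = W a - of_int n * W b"
proof -
  have "finite (supp (\<lambda>x. n * delta b x))"
    by (rule finite_subset[of _ "{b}"]) (auto simp: supp_def delta_def)
  then show ?thesis by (simp add: LL_diff LL_scale)
qed

definition FF' where "FF' k = FF (snd k)"

lemma LL_bar_d1: "LL (bar_d ([g], m)) W = W ([], map (inv g) m) - W ([], m)"
  unfolding bar_d1 by (simp add: LL_diff)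

lemma lin_FF'_rel:
  assumes "\<rho> \<in> rel_chains \<Gamma> 0 1"
  shows "lin FF' \<rho> = (\<lambda>_. 0)"
proof
  fix l
  show "lin FF' \<rho> l = 0" unfolding lin_LL
  proof (rule LL_zspan_zero[OF assms[unfolded rel_chains_def]])
    fix b assume "b \<in> {\<lambda>x. delta (gs, zs) x - sign \<tau> * delta (gs, permute_tuple \<tau> zs) x |gs zs \<tau>.
             length gs = 0 \<and> set gs \<subseteq> \<Gamma> \<and> zs \<in> tuples 1 \<and> \<tau> permutes {..1}}"
    then obtain gs zs \<tau> where b: "b = (\<lambda>x. delta (gs, zs) x - sign \<tau> * delta (gs, permute_tuple \<tau> zs) x)"
      "zs \<in> tuples 1" "\<tau> permutes {..1}" by blast
    have sb: "supp b \<subseteq> {(gs, zs), (gs, permute_tuple \<tau> zs)}" unfolding b by (auto simp: supp_def delta_def)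
    then show "finite (supp b)" by (rule finite_subset) auto
    obtain a c where ac: "zs = [a, c]" "a \<noteq> c" using b(2) tuples1 by blast
    have LLb: "LL b (\<lambda>k. FF' k l) = FF zs l - of_int (sign \<tau>) * FF (permute_tuple \<tau> zs) l"
      unfolding b(1) LL_two by (simp add: FF'_def)
    have "\<tau> = id \<or> \<tau> = Transposition.transpose 0 1" using perm2 b(3) by simp
    then show "LL b (\<lambda>k. FF' k l) = 0"
    proof
      assume "\<tau> = id"
      then show ?thesis unfolding LLb by (simp add: permute_tuple_def map_nth)
    next
      assume t: "\<tau> = Transposition.transpose 0 1"
      have "permute_tuple \<tau> zs = rev zs" unfolding t ac by (simp add: permute_tuple2)
      moreover have "sign \<tau> = -1" unfolding t by (simp add: sign_swap_id)
      ultimately show ?thesis unfolding LLb FF_def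
        using eps_rev[OF b(2)] nm_rev[OF b(2)] tt_rev[OF b(2)] by simp
    qed
  qed
qed

end

context kl
begin

lemma reduce:
  assumes cyc: "c \<in> cycles1 \<Gamma> 1"
  shows "\<exists>R U. finite R \<and> (\<forall>r\<in>R. r \<in> tuples 1 \<and> rep r = r \<and> U r \<in> \<Gamma> \<and> map (U r) r = r) \<and>
     (\<lambda>z. c z - (\<Sum>r\<in>R. delta ([U r], r) z)) \<in> ZZ"
proof -
  have cc: "c \<in> chains \<Gamma> 1 1" and cb: "lin bar_d c \<in> rel_chains \<Gamma> 0 1"
    using cyc unfolding cycles1_def by auto
  have fc: "finite (supp c)" using finite_supp_chains[OF cc] .
  define S where "S = supp c"
  define gx where "gx x = hd (fst x)" for x :: "(pt \<Rightarrow> pt) list \<times> pt list"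
  define mx where "mx x = snd x" for x :: "(pt \<Rightarrow> pt) list \<times> pt list"
  define qx where "qx x = map (inv (gx x)) (mx x)" for x
  have xS: "x = ([gx x], mx x) \<and> gx x \<in> \<Gamma> \<and> mx x \<in> tuples 1" if "x \<in> S" for x
    using supp_chains11[OF cc that[unfolded S_def]] unfolding gx_def mx_def by auto
  define E where "E x = (\<lambda>z. eps (mx x) * delta ([sx (gx x) (mx x)], rep (mx x)) z + FF (mx x) z - FF (qx x) z)" for x
  have T1: "(\<lambda>z. \<Sum>x\<in>S. (\<lambda>z. c x * (delta x z - E x z)) z) \<in> ZZ"
  proof (rule Z_sum)
    show "finite S" using fc S_def by simp
    fix x assume x: "x \<in> S"
    have "(\<lambda>z. delta ([gx x], mx x) z - E x z) \<in> ZZ"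
      unfolding E_def qx_def using red1(3)[of "gx x" "mx x"] xS[OF x] by simp
    then have "(\<lambda>z. delta x z - E x z) \<in> ZZ" using xS[OF x] by simp
    then show "(\<lambda>z. c x * (delta x z - E x z)) \<in> ZZ" by (rule Z_scale)
  qed
  have cexp: "c z = (\<Sum>x\<in>S. c x * delta x z)" for z
    using LL_expand[OF fc] unfolding S_def by (metis (no_types, lifting))
  have T2: "(\<Sum>x\<in>S. c x * (FF (mx x) z - FF (qx x) z)) = 0" for z
  proof -
    have "lin FF' (lin bar_d c) = (\<lambda>_. 0)" using lin_FF'_rel[OF cb] .
    then have "LL (lin bar_d c) (\<lambda>k. FF' k z) = 0" unfolding lin_LL by meson
    moreover have "LL (lin bar_d c) (\<lambda>k. FF' k z) = LL c (\<lambda>k. LL (bar_d k) (\<lambda>k'. FF' k' z))"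
      using fc supp_bar_d by (intro LL_lin) auto
    moreover have "LL c (\<lambda>k. LL (bar_d k) (\<lambda>k'. FF' k' z)) = (\<Sum>x\<in>S. c x * (FF (qx x) z - FF (mx x) z))"
      unfolding LL_def[of c] S_def[symmetric]
    proof (rule sum.cong[OF refl])
      fix x assume x: "x \<in> S"
      have "LL (bar_d x) (\<lambda>k'. FF' k' z) = FF (qx x) z - FF (mx x) z"
        using xS[OF x] LL_bar_d1[of "gx x" "mx x" "\<lambda>k'. FF' k' z"] unfolding qx_def FF'_def by simp
      then show "of_int (c x) * LL (bar_d x) (\<lambda>k'. FF' k' z) = c x * (FF (qx x) z - FF (mx x) z)" by simp
    qed
    ultimately have "(\<Sum>x\<in>S. c x * (FF (qx x) z - FF (mx x) z)) = 0" by simp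
    then have "- (\<Sum>x\<in>S. c x * (FF (qx x) z - FF (mx x) z)) = 0" by simp
    then show ?thesis by (simp add: sum_negf[symmetric] algebra_simps)
  qed
  define c' where "c' z = (\<Sum>x\<in>S. c x * eps (mx x) * delta ([sx (gx x) (mx x)], rep (mx x)) z)" for z
  have Tc': "(\<lambda>z. c z - c' z) \<in> ZZ"
  proof (rule Z_eq[OF T1])
    show "(\<lambda>z. \<Sum>x\<in>S. c x * (delta x z - E x z)) = (\<lambda>z. c z - c' z)"
    proof
      fix z
      have "(\<Sum>x\<in>S. c x * (delta x z - E x z)) = (\<Sum>x\<in>S. c x * delta x z) - (\<Sum>x\<in>S. c x * eps (mx x) * delta ([sx (gx x) (mx x)], rep (mx x)) z)
         - (\<Sum>x\<in>S. c x * (FF (mx x) z - FF (qx x) z))"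
        unfolding E_def by (simp add: sum_subtractf[symmetric] algebra_simps)
      then show "(\<Sum>x\<in>S. c x * (delta x z - E x z)) = c z - c' z"
        using T2[of z] cexp[of z] unfolding c'_def by simp
    qed
  qed
  define rx where "rx x = rep (mx x)" for x
  define R where "R = rx ` S"
  have fR: "finite R" unfolding R_def using fc S_def by simp
  have Rprops: "r \<in> tuples 1 \<and> rep r = r" if "r \<in> R" for r
    using that xS rep_tuples rep_rep unfolding R_def rx_def by blast
  define w where "w r = (\<lambda>z. \<Sum>x\<in>{x\<in>S. rx x = r}. c x * eps (mx x) * delta ([sx (gx x) (mx x)], r) z)" for r
  have c'w: "c' z = (\<Sum>r\<in>R. w r z)" for z
  proof -
    have "c' z = (\<Sum>x\<in>S. c x * eps (mx x) * delta ([sx (gx x) (mx x)], rx x) z)" unfolding c'_def rx_def ..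
    also have "\<dots> = (\<Sum>r\<in>rx ` S. \<Sum>x\<in>{x\<in>S. rx x = r}. c x * eps (mx x) * delta ([sx (gx x) (mx x)], rx x) z)"
      by (rule sum.image_gen) (use fc S_def in simp)
    also have "\<dots> = (\<Sum>r\<in>R. w r z)" unfolding R_def w_def
      by (intro sum.cong refl) auto
    finally show ?thesis .
  qed
  have wS: "w r \<in> zspan (Stg r)" if r: "r \<in> R" for r
    unfolding w_def
  proof (rule zspan_sum)
    show "finite {x \<in> S. rx x = r}" using fc S_def by simp
    fix x assume x: "x \<in> {x \<in> S. rx x = r}"
    have "delta ([sx (gx x) (mx x)], r) \<in> Stg r"
      unfolding Stg_def using red1(1,2)[of "gx x" "mx x"] xS x unfolding rx_def by auto
    then have "delta ([sx (gx x) (mx x)], r) \<in> zspan (Stg r)" by (rule zspan.zspan_base)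
    then have "(\<lambda>z. (c x * eps (mx x)) * delta ([sx (gx x) (mx x)], r) z) \<in> zspan (Stg r)" by (rule zspan_scale)
    then show "(\<lambda>z. c x * eps (mx x) * delta ([sx (gx x) (mx x)], r) z) \<in> zspan (Stg r)" by simp
  qed
  have "\<forall>r\<in>R. \<exists>u. u \<in> \<Gamma> \<and> map u r = r \<and> (\<lambda>z. w r z - delta ([u], r) z) \<in> ZZ"
    using good wS Rprops by blast
  then obtain U where U: "\<forall>r\<in>R. U r \<in> \<Gamma> \<and> map (U r) r = r \<and> (\<lambda>z. w r z - delta ([U r], r) z) \<in> ZZ"
    by metis
  have "(\<lambda>z. \<Sum>r\<in>R. (\<lambda>z. w r z - delta ([U r], r) z) z) \<in> ZZ" using fR U by (intro Z_sum) auto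
  then have "(\<lambda>k. (\<lambda>z. c z - c' z) k + (\<lambda>z. \<Sum>r\<in>R. (\<lambda>z. w r z - delta ([U r], r) z) z) k) \<in> ZZ"
    using Tc' by (intro Z_add)
  then have "(\<lambda>z. c z - (\<Sum>r\<in>R. delta ([U r], r) z)) \<in> ZZ"
    by (rule Z_eq) (simp add: fun_eq_iff c'w sum_subtractf)
  then show ?thesis using fR U Rprops by blast
qed

end

context kl
begin

lemma G2a:
  assumes z01: "z0 \<noteq> z1" and u: "u \<in> \<Gamma>" "u z0 = z0" "u z1 = z1" "u \<noteq> id"
    and g: "\<gamma> \<in> \<Gamma>" "\<gamma> z1 = z0"
  shows False
proof -
  define v where "v = inv \<gamma> \<circ> u \<circ> \<gamma>"
  have v: "v \<in> \<Gamma>" unfolding v_def using u g by blast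
  have ig0: "inv \<gamma> z0 = z1" using g by (simp add: inv_eq)
  have "v z1 = z1" unfolding v_def using g u ig0 by simp
  then have "v z0 = z0" using G1[OF z01 u(1,2,3,4) v] by blast
  then have "inv \<gamma> (u (\<gamma> z0)) = z0" unfolding v_def by simp
  then have ug: "u (\<gamma> z0) = \<gamma> z0" using g by (simp add: inv_eq)
  show False
  proof (cases "\<gamma> z0 = z0 \<or> \<gamma> z0 = z1")
    case True
    then show False
    proof
      assume "\<gamma> z0 = z0"
      then have "\<gamma> z0 = \<gamma> z1" using g by simp
      then show False using z01 inj_g[OF g(1)] by blast
    next
      assume "\<gamma> z0 = z1"
      then show False using noswap[OF z01 g(1)] g by blast
    qed
  next
    case False
    then show False using fix3[OF z01 u(1,2,3) ug] u(4) by blast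
  qed
qed

lemma G2b_aux:
  assumes z01: "z0 \<noteq> z1" and u: "u \<in> \<Gamma>" "u z0 = z0" "u z1 = z1" "u \<noteq> id"
    and y01: "y0 \<noteq> y1" and u': "u' \<in> \<Gamma>" "u' y0 = y0" "u' y1 = y1" "u' \<noteq> id"
    and g: "\<gamma> \<in> \<Gamma>" "\<gamma> y1 = z1"
  shows "\<gamma> y0 = z0"
proof -
  define v where "v = \<gamma> \<circ> u' \<circ> inv \<gamma>"
  have v: "v \<in> \<Gamma>" unfolding v_def using u' g by blast
  have igz: "inv \<gamma> z1 = y1" using g by (simp add: inv_eq)
  have v1: "v z1 = z1" unfolding v_def using g u' igz by simp
  have vid: "v \<noteq> id"
  proof
    assume "v = id"
    then have "inv \<gamma> \<circ> v \<circ> \<gamma> = id" using g by simp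
    moreover have "inv \<gamma> \<circ> v \<circ> \<gamma> = u'" unfolding v_def using g by (simp add: fun_eq_iff)
    ultimately show False using u'(4) by simp
  qed
  have v0: "v z0 = z0" using G1[OF z01 u(1,2,3,4) v v1] .
  have vg: "v (\<gamma> y0) = \<gamma> y0" unfolding v_def using g u' by simp
  show ?thesis
  proof (rule ccontr)
    assume ne: "\<gamma> y0 \<noteq> z0"
    have "\<gamma> y0 \<noteq> z1" using g y01 inj_g[OF g(1)] by metis
    then show False using fix3[OF z01 v v0 v1 vg ne] vid by blast
  qed
qed

lemma G2b:
  assumes z01: "z0 \<noteq> z1" and u: "u \<in> \<Gamma>" "u z0 = z0" "u z1 = z1" "u \<noteq> id"
    and y01: "y0 \<noteq> y1" and u': "u' \<in> \<Gamma>" "u' y0 = y0" "u' y1 = y1" "u' \<noteq> id"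
    and g: "\<gamma> \<in> \<Gamma>" "\<gamma> y1 = z1 \<or> \<gamma> y0 = z1"
  shows "[y0, y1] \<in> Opm [z0, z1]"
proof -
  have ig: "inv \<gamma> \<in> \<Gamma>" using g by blast
  from g(2) show ?thesis
  proof
    assume "\<gamma> y1 = z1"
    then have "\<gamma> y0 = z0" using G2b_aux[OF z01 u y01 u' g(1)] by blast
    then have "inv \<gamma> z0 = y0" "inv \<gamma> z1 = y1" using \<open>\<gamma> y1 = z1\<close> g(1) by (simp_all add: inv_eq)
    then have "[y0, y1] = map (inv \<gamma>) [z0, z1]" by simp
    then show ?thesis using act_in[OF ig, of "[z0, z1]"] by argo
  next
    assume a: "\<gamma> y0 = z1"
    have "\<gamma> y1 = z0" using G2b_aux[OF z01 u y01[symmetric] u'(1,3,2,4) g(1) a] .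
    then have "inv \<gamma> z0 = y1" "inv \<gamma> z1 = y0" using a g(1) by (simp_all add: inv_eq)
    then have h: "[y0, y1] = map (inv \<gamma>) (rev [z0, z1])" by simp
    show ?thesis unfolding Opm_def
      by (rule UnI2, rule CollectI, rule exI[of _ "inv \<gamma>"]) (use h ig in simp)
  qed
qed

end

context kl
begin

definition orb :: "pt \<Rightarrow> pt \<Rightarrow> bool" where
  "orb z1 p \<longleftrightarrow> (\<exists>\<gamma>\<in>\<Gamma>. \<gamma> z1 = p)"

definition TT :: "pt \<Rightarrow> pt \<Rightarrow> (pt \<Rightarrow> pt)" where
  "TT z1 p = (SOME \<gamma>. \<gamma> \<in> \<Gamma> \<and> \<gamma> z1 = p)"

definition sv :: "pt \<Rightarrow> (pt \<Rightarrow> pt) \<Rightarrow> pt \<Rightarrow> (pt \<Rightarrow> pt)" where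
  "sv z1 g p = inv (TT z1 p) \<circ> g \<circ> TT z1 (inv g p)"

definition wt :: "pt \<Rightarrow> pt \<Rightarrow> ((pt \<Rightarrow> pt) list \<times> pt list) \<Rightarrow> real" where
  "wt z0 z1 k = (if orb z1 (hd (snd k)) then ln (norm (coef (conjg z0 z1 (sv z1 (hd (fst k)) (hd (snd k)))))) else 0)"

lemma TT_props: assumes "orb z1 p" shows "TT z1 p \<in> \<Gamma> \<and> TT z1 p z1 = p"
proof -
  from assms obtain \<gamma> where "\<gamma> \<in> \<Gamma> \<and> \<gamma> z1 = p" unfolding orb_def by blast
  then show ?thesis unfolding TT_def by (rule someI[where P="\<lambda>\<gamma>. \<gamma> \<in> \<Gamma> \<and> \<gamma> z1 = p"])
qed

lemma coef_id: "coef id = 1" by (simp add: coef_def)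

lemma orb_inv: "g \<in> \<Gamma> \<Longrightarrow> orb z1 (inv g p) \<longleftrightarrow> orb z1 p"
proof
  assume g: "g \<in> \<Gamma>" and "orb z1 (inv g p)"
  then obtain \<gamma> where "\<gamma> \<in> \<Gamma>" "\<gamma> z1 = inv g p" unfolding orb_def by blast
  then have "(g \<circ> \<gamma>) z1 = p" "g \<circ> \<gamma> \<in> \<Gamma>" using g by auto
  then show "orb z1 p" unfolding orb_def by blast
next
  assume g: "g \<in> \<Gamma>" and "orb z1 p"
  then obtain \<gamma> where "\<gamma> \<in> \<Gamma>" "\<gamma> z1 = p" unfolding orb_def by blast
  then have "(inv g \<circ> \<gamma>) z1 = inv g p" "inv g \<circ> \<gamma> \<in> \<Gamma>" using g by auto
  then show "orb z1 (inv g p)" unfolding orb_def by blast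
qed

lemma sv_props:
  assumes g: "g \<in> \<Gamma>" and p: "orb z1 p"
  shows "sv z1 g p \<in> \<Gamma>" "sv z1 g p z1 = z1"
proof -
  have q: "orb z1 (inv g p)" using orb_inv[OF g] p by simp
  have T1: "TT z1 p \<in> \<Gamma>" "TT z1 p z1 = p" using TT_props[OF p] by auto
  have T2: "TT z1 (inv g p) \<in> \<Gamma>" "TT z1 (inv g p) z1 = inv g p" using TT_props[OF q] by auto
  show "sv z1 g p \<in> \<Gamma>" unfolding sv_def using T1 T2 g by blast
  show "sv z1 g p z1 = z1" unfolding sv_def using T1 T2 g by (simp add: inv_eq)
qed

lemma sv_comp:
  assumes g: "g \<in> \<Gamma>" and k: "k \<in> \<Gamma>" and p: "orb z1 p"
  shows "sv z1 (g \<circ> k) p = sv z1 g p \<circ> sv z1 k (inv g p)"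
proof -
  have q: "orb z1 (inv g p)" using orb_inv[OF g] p by simp
  have T2: "TT z1 (inv g p) \<in> \<Gamma>" using TT_props[OF q] by auto
  have "inv (g \<circ> k) p = inv k (inv g p)" using inv_comp[OF g k] by simp
  then show ?thesis unfolding sv_def using T2 by (simp add: fun_eq_iff)
qed

context
  fixes z0 z1 :: pt assumes z01: "z0 \<noteq> z1"
begin

lemma coef_cj:
  assumes a: "a \<in> \<Gamma>" "a z1 = z1"
  shows "coef (conjg z0 z1 a) \<noteq> 0"
  using cj_fix1[OF z01 a] by auto

lemma coef_cj_comp:
  assumes a: "a \<in> \<Gamma>" "a z1 = z1" and b: "b \<in> \<Gamma>" "b z1 = z1"
  shows "coef (conjg z0 z1 (a \<circ> b)) = coef (conjg z0 z1 a) * coef (conjg z0 z1 b)"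
proof -
  obtain \<alpha> \<beta> where A: "conjg z0 z1 a = affm \<alpha> \<beta>" using cj_fix1[OF z01 a] by blast
  obtain \<alpha>' \<beta>' where B: "conjg z0 z1 b = affm \<alpha>' \<beta>'" using cj_fix1[OF z01 b] by blast
  show ?thesis unfolding cj_comp[OF z01] A B affm_comp by simp
qed

lemma cocycle:
  assumes g: "g \<in> \<Gamma>" and k: "k \<in> \<Gamma>"
  shows "wt z0 z1 ([k], [inv g p]) - wt z0 z1 ([g \<circ> k], [p]) + wt z0 z1 ([g], [p]) = 0"
proof (cases "orb z1 p")
  case False
  then have "\<not> orb z1 (inv g p)" using orb_inv[OF g] by simp
  then show ?thesis using False by (simp add: wt_def)
next
  case True
  have q: "orb z1 (inv g p)" using orb_inv[OF g] True by simp
  note s1 = sv_props[OF g True] and s2 = sv_props[OF k q]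
  have "coef (conjg z0 z1 (sv z1 (g \<circ> k) p)) = coef (conjg z0 z1 (sv z1 g p)) * coef (conjg z0 z1 (sv z1 k (inv g p)))"
    unfolding sv_comp[OF g k True] by (rule coef_cj_comp[OF s1 s2])
  moreover have "coef (conjg z0 z1 (sv z1 g p)) \<noteq> 0" "coef (conjg z0 z1 (sv z1 k (inv g p))) \<noteq> 0"
    using coef_cj s1 s2 by auto
  ultimately show ?thesis using True q by (simp add: wt_def norm_mult ln_mult)
qed

lemma wt_id: "wt z0 z1 ([id], [p]) = 0"
proof (cases "orb z1 p")
  case True
  have "sv z1 id p = id" unfolding sv_def using TT_props[OF True] by (simp add: fun_eq_iff)
  then show ?thesis by (simp add: wt_def cj_id[OF z01] coef_id)
qed (simp add: wt_def)

lemma wt_u: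
  assumes u: "u \<in> \<Gamma>" "u z1 = z1"
  shows "wt z0 z1 ([u], [z1]) = ln (norm (coef (conjg z0 z1 u)))"
proof -
  have o: "orb z1 z1" unfolding orb_def using id_in by (metis id_apply)
  define T where "T = TT z1 z1"
  have T: "T \<in> \<Gamma>" "T z1 = z1" using TT_props[OF o] unfolding T_def by auto
  have iT: "inv T \<in> \<Gamma>" "inv T z1 = z1" using T by (auto simp: inv_eq)
  have iu: "inv u z1 = z1" using u by (simp add: inv_eq)
  have "sv z1 u z1 = inv T \<circ> u \<circ> T" unfolding sv_def T_def iu ..
  then have "coef (conjg z0 z1 (sv z1 u z1)) = coef (conjg z0 z1 (inv T)) * coef (conjg z0 z1 u) * coef (conjg z0 z1 T)"
    using coef_cj_comp iT u T by (simp add: comp_in)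
  moreover have "coef (conjg z0 z1 (inv T)) * coef (conjg z0 z1 T) = 1"
  proof -
    have "coef (conjg z0 z1 (inv T \<circ> T)) = coef (conjg z0 z1 (inv T)) * coef (conjg z0 z1 T)"
      using coef_cj_comp iT T by blast
    moreover have "inv T \<circ> T = id" using T by simp
    ultimately show ?thesis by (simp add: cj_id[OF z01] coef_id)
  qed
  ultimately have "coef (conjg z0 z1 (sv z1 u z1)) = coef (conjg z0 z1 u)" by (simp add: algebra_simps)
  then show ?thesis using o by (simp add: wt_def)
qed

end

end

lemma finite_supp_sum:
  assumes "finite I" "\<And>i. i \<in> I \<Longrightarrow> finite (supp (f i))"
  shows "finite (supp (\<lambda>z. \<Sum>i\<in>I. f i z))"
proof -
  have "supp (\<lambda>z. \<Sum>i\<in>I. f i z) \<subseteq> (\<Union>i\<in>I. supp (f i))"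
  proof
    fix z assume "z \<in> supp (\<lambda>z. \<Sum>i\<in>I. f i z)"
    then have "(\<Sum>i\<in>I. f i z) \<noteq> 0" by (simp add: supp_def)
    then obtain i where "i \<in> I" "f i z \<noteq> 0" using sum_nz by blast
    then show "z \<in> (\<Union>i\<in>I. supp (f i))" by (auto simp: supp_def)
  qed
  then show ?thesis using assms by (meson finite_UN_I finite_subset)
qed

lemma LL_sum:
  assumes "finite I" "\<And>i. i \<in> I \<Longrightarrow> finite (supp (f i))"
  shows "LL (\<lambda>z. \<Sum>i\<in>I. f i z) W = (\<Sum>i\<in>I. LL (f i) W)"
  using assms
proof (induction I rule: finite_induct)
  case empty then show ?case by simp
next
  case (insert i I)
  have "LL (\<lambda>z. \<Sum>i\<in>insert i I. f i z) W = LL (\<lambda>z. f i z + (\<Sum>i\<in>I. f i z)) W"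
    using insert by simp
  also have "\<dots> = LL (f i) W + LL (\<lambda>z. \<Sum>i\<in>I. f i z) W"
    using insert finite_supp_sum[of I f] by (intro LL_add) auto
  finally show ?case using insert by simp
qed

lemma LL_2: "LL (\<lambda>y. delta a y - delta b y) W = W a - W b"
  by (simp add: LL_diff)

lemma LL_3: "LL (\<lambda>y. delta a y - delta b y + delta c y) W = W a - W b + W c"
proof -
  have "finite (supp (\<lambda>y. delta a y - delta b y))"
    by (rule finite_subset[of _ "{a, b}"]) (auto simp: supp_def delta_def)
  then show ?thesis using LL_add[of "\<lambda>y. delta a y - delta b y" "delta c" W] by (simp add: LL_diff)
qed

context kl
begin

lemma wt_vanish0:
  assumes z01: "z0 \<noteq> z1" and x: "x \<in> boundaries1 \<Gamma> 0"
  shows "LL x (wt z0 z1) = 0"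
proof -
  obtain b r where br: "x = (\<lambda>y. lin bar_d b y + r y)" "b \<in> chains \<Gamma> 2 0" "r \<in> rel_chains \<Gamma> 1 0"
    using x unfolding boundaries1_def by blast
  have fb: "finite (supp b)" using finite_supp_chains[OF br(2)] .
  have fl: "finite (supp (lin bar_d b))" using fb supp_bar_d by (intro finite_supp_lin) auto
  have fr: "finite (supp r)" using finite_supp_rel[OF br(3)] .
  have "LL (lin bar_d b) (wt z0 z1) = LL b (\<lambda>k. LL (bar_d k) (wt z0 z1))"
    using fb supp_bar_d by (intro LL_lin) auto
  also have "\<dots> = 0"
  proof (rule LL_vanish)
    fix k assume k: "k \<in> supp b"
    have "k \<in> \<Union> (supp ` {delta (gs, zs) |gs zs. length gs = 2 \<and> set gs \<subseteq> \<Gamma> \<and> zs \<in> tuples 0})"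
      using supp_zspan br(2) k unfolding chains_def by blast
    then obtain gs zs where kk: "k = (gs, zs)" "length gs = 2" "set gs \<subseteq> \<Gamma>" "zs \<in> tuples 0" by auto
    obtain g h where gh: "gs = [g, h]" using kk(2) by (auto simp: numeral_2_eq_2 length_Suc_conv)
    obtain p where p: "zs = [p]" using kk(4) tuples0 by blast
    have g: "g \<in> \<Gamma>" "h \<in> \<Gamma>" using kk(3) gh by auto
    show "LL (bar_d k) (wt z0 z1) = 0"
      unfolding kk(1) gh p bar_d2 LL_3 using cocycle[OF z01 g] by simp
  qed
  finally have 1: "LL (lin bar_d b) (wt z0 z1) = 0" .
  have 2: "LL r (wt z0 z1) = 0"
  proof (rule LL_zspan_zero[OF br(3)[unfolded rel_chains_def]])
    fix \<rho> assume "\<rho> \<in> {\<lambda>x. delta (gs, zs) x - sign \<tau> * delta (gs, permute_tuple \<tau> zs) x |gs zs \<tau>.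
             length gs = 1 \<and> set gs \<subseteq> \<Gamma> \<and> zs \<in> tuples 0 \<and> \<tau> permutes {..0}}"
    then obtain gs zs \<tau> where \<rho>: "\<rho> = (\<lambda>x. delta (gs, zs) x - sign \<tau> * delta (gs, permute_tuple \<tau> zs) x)"
      "zs \<in> tuples 0" "\<tau> permutes {..0}" by blast
    have "\<tau> = id" using \<rho>(3) by (simp add: permutes_sing)
    moreover have "permute_tuple id zs = zs" by (simp add: permute_tuple_def map_nth)
    ultimately have "\<rho> = (\<lambda>_. 0)" unfolding \<rho>(1) by simp
    then show "finite (supp \<rho>)" "LL \<rho> (wt z0 z1) = 0" by (simp_all add: supp_def)
  qed
  show ?thesis unfolding br(1) LL_add[OF fl fr] 1 2 by simp
qed

definition W1 :: "pt \<Rightarrow> pt \<Rightarrow> ((pt \<Rightarrow> pt) list \<times> pt list) \<Rightarrow> real" where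
  "W1 z0 z1 k = LL (coeff_bd k) (wt z0 z1)"

lemma W1_2: "W1 z0 z1 (gs, [a, b]) = wt z0 z1 (gs, [b]) - wt z0 z1 (gs, [a])"
  unfolding W1_def coeff_bd2 LL_2 ..

lemma W1_vanish:
  assumes z01: "z0 \<noteq> z1" and x: "x \<in> ZZ"
  shows "LL x (W1 z0 z1) = 0"
proof -
  have H: "finite (supp \<rho>) \<and> LL \<rho> (W1 z0 z1) = 0" if "\<rho> \<in> D1 \<union> R1" for \<rho>
  using that
  proof
    assume "\<rho> \<in> D1"
    then obtain g k m where gkm: "\<rho> = bar_d ([g, k], m)" "g \<in> \<Gamma>" "k \<in> \<Gamma>" "m \<in> tuples 1"
      unfolding D1_def by blast
    obtain a b where ab: "m = [a, b]" using gkm(4) tuples1 by blast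
    have "LL \<rho> (W1 z0 z1) = 0"
      unfolding gkm(1) bar_d2 LL_3 ab using cocycle[OF z01 gkm(2,3), of a] cocycle[OF z01 gkm(2,3), of b]
      by (simp add: W1_2)
    then show ?thesis using gkm(1) supp_bar_d by simp
  next
    assume "\<rho> \<in> R1"
    then obtain gs zs \<tau> where \<rho>: "\<rho> = (\<lambda>x. delta (gs, zs) x - sign \<tau> * delta (gs, permute_tuple \<tau> zs) x)"
      "zs \<in> tuples 1" "\<tau> permutes {..1}" unfolding R1_def by blast
    have fs: "finite (supp \<rho>)"
      by (rule finite_subset[of _ "{(gs, zs), (gs, permute_tuple \<tau> zs)}"]) (auto simp: \<rho>(1) supp_def delta_def)
    obtain a b where ab: "zs = [a, b]" using \<rho>(2) tuples1 by blast
    have "\<tau> = id \<or> \<tau> = Transposition.transpose 0 1" using perm2 \<rho>(3) by simp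
    then have "LL \<rho> (W1 z0 z1) = 0"
    proof
      assume "\<tau> = id"
      then show ?thesis unfolding \<rho>(1) LL_two by (simp add: permute_tuple_def map_nth)
    next
      assume t: "\<tau> = Transposition.transpose 0 1"
      have "permute_tuple \<tau> zs = [b, a]" unfolding t ab by (simp add: permute_tuple2)
      moreover have "sign \<tau> = -1" unfolding t by (simp add: sign_swap_id)
      ultimately show ?thesis unfolding \<rho>(1) LL_two ab by (simp add: W1_2)
    qed
    then show ?thesis using fs by simp
  qed
  show ?thesis using H by (intro LL_zspan_zero[OF x[unfolded ZZ_def]]) auto
qed

end

context kl
begin

lemma main:
  assumes cyc: "c \<in> cycles1 \<Gamma> 1" and bd: "lin coeff_bd c \<in> boundaries1 \<Gamma> 0"
  shows "c \<in> boundaries1 \<Gamma> 1"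
proof -
  obtain R U where RU: "finite R" "\<forall>r\<in>R. r \<in> tuples 1 \<and> rep r = r \<and> U r \<in> \<Gamma> \<and> map (U r) r = r"
    and cz: "(\<lambda>z. c z - (\<Sum>r\<in>R. delta ([U r], r) z)) \<in> ZZ"
    using reduce[OF cyc] by blast
  have cc: "c \<in> chains \<Gamma> 1 1" using cyc unfolding cycles1_def by auto
  have fc: "finite (supp c)" using finite_supp_chains[OF cc] .
  define \<Sigma> where "\<Sigma> = (\<lambda>z. \<Sum>r\<in>R. delta ([U r], r) z)"
  have f\<Sigma>: "finite (supp \<Sigma>)" unfolding \<Sigma>_def using RU(1) by (intro finite_supp_sum) auto
  have allid: "U r = id" if r: "r \<in> R" for r
  proof (rule ccontr)
    assume uid: "U r \<noteq> id"
    obtain z0 z1 where rr: "r = [z0, z1]" "z0 \<noteq> z1" using RU(2) r tuples1 by blast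
    note z01 = rr(2)
    define u where "u = U r"
    have u: "u \<in> \<Gamma>" "u z0 = z0" "u z1 = z1" "u \<noteq> id" using RU(2) r rr uid unfolding u_def by auto
    have "LL (lin coeff_bd c) (wt z0 z1) = 0" using wt_vanish0[OF z01 bd] .
    moreover have "LL (lin coeff_bd c) (wt z0 z1) = LL c (W1 z0 z1)"
      unfolding W1_def using fc supp_coeff_bd by (intro LL_lin) auto
    ultimately have "LL c (W1 z0 z1) = 0" by simp
    moreover have "LL (\<lambda>z. c z - \<Sigma> z) (W1 z0 z1) = 0" using W1_vanish[OF z01 cz] by (simp add: \<Sigma>_def)
    ultimately have "LL \<Sigma> (W1 z0 z1) = 0" using LL_diff[OF fc f\<Sigma>, of "W1 z0 z1"] by simp
    moreover have "LL \<Sigma> (W1 z0 z1) = (\<Sum>r'\<in>R. W1 z0 z1 ([U r'], r'))"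
      unfolding \<Sigma>_def using RU(1) by (simp add: LL_sum)
    moreover have "(\<Sum>r'\<in>R. W1 z0 z1 ([U r'], r')) = W1 z0 z1 ([U r], r)"
    proof (rule sum.remove[OF RU(1) r, THEN trans])
      have "W1 z0 z1 ([U r'], r') = 0" if r': "r' \<in> R - {r}" for r'
      proof -
        obtain y0 y1 where yy: "r' = [y0, y1]" "y0 \<noteq> y1" using RU(2) r' tuples1 by blast
        show ?thesis
        proof (cases "U r' = id")
          case True
          then show ?thesis unfolding yy W1_2 using wt_id[OF z01] by simp
        next
          case False
          have u': "U r' \<in> \<Gamma>" "U r' y0 = y0" "U r' y1 = y1" using RU(2) r' yy by auto
          have no: "\<not> orb z1 y" if "y = y0 \<or> y = y1" for y
          proof
            assume "orb z1 y"
            then obtain \<gamma> where g: "\<gamma> \<in> \<Gamma>" "\<gamma> z1 = y" unfolding orb_def by blast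
            have ig: "inv \<gamma> \<in> \<Gamma>" "inv \<gamma> y = z1" using g by (auto simp: inv_eq)
            have "[y0, y1] \<in> Opm [z0, z1]"
              using G2b[OF z01 u yy(2) u' False ig(1)] ig(2) that by blast
            then have "rep r' = rep r" using rr yy rep_eq by simp
            then have "r' = r" using RU(2) r r' by auto
            then show False using r' by simp
          qed
          then show ?thesis unfolding yy W1_2 by (simp add: wt_def)
        qed
      qed
      then show "W1 z0 z1 ([U r], r) + (\<Sum>r'\<in>R - {r}. W1 z0 z1 ([U r'], r')) = W1 z0 z1 ([U r], r)"
        by simp
    qed
    moreover have "W1 z0 z1 ([U r], r) = ln (norm (coef (conjg z0 z1 u)))"
    proof -
      have "\<not> orb z1 z0"
      proof
        assume "orb z1 z0"
        then obtain \<gamma> where "\<gamma> \<in> \<Gamma>" "\<gamma> z1 = z0" unfolding orb_def by blast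
        then show False using G2a[OF z01 u] by blast
      qed
      then have "wt z0 z1 ([u], [z0]) = 0" by (simp add: wt_def)
      moreover have "W1 z0 z1 ([U r], r) = W1 z0 z1 ([u], [z0, z1])" using rr(1) u_def by simp
      ultimately show ?thesis unfolding W1_2 wt_u[OF z01 u(1,3)] by simp
    qed
    ultimately have l0: "ln (norm (coef (conjg z0 z1 u))) = 0" by simp
    obtain a where a: "a \<noteq> 0" "conjg z0 z1 u = affm a 0" using cj_fix01[OF z01 u(1,3,2)] by blast
    have "norm a = 1" using l0 a by simp
    then have "u = id" using ell[OF z01 u(1,2,3) a(2)] by simp
    then show False using u(4) by simp
  qed
  have "(\<lambda>z. \<Sum>r\<in>R. delta ([U r], r) z) \<in> ZZ"
    using RU allid Z_id by (intro Z_sum) auto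
  then have "(\<lambda>k. (\<lambda>z. c z - (\<Sum>r\<in>R. delta ([U r], r) z)) k + (\<lambda>z. \<Sum>r\<in>R. delta ([U r], r) z) k) \<in> ZZ"
    using cz by (intro Z_add)
  then have "c \<in> ZZ" by simp
  then show ?thesis by (rule Z_B)
qed

end

theorem lemma3p3:
  fixes \<Gamma> :: "(pt \<Rightarrow> pt) set"
  assumes "kleinian \<Gamma>" and "torsion_free \<Gamma>" and "finite_covolume \<Gamma>"
  shows "\<forall>c \<in> cycles1 \<Gamma> 1. lin coeff_bd c \<in> boundaries1 \<Gamma> 0 \<longrightarrow> c \<in> boundaries1 \<Gamma> 1"
proof -
  interpret kl \<Gamma> using assms(1,2) by unfold_locales
  show ?thesis using main by blast
qed

end
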